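(* Let $\gamma_1,\dots,\gamma_n:[a,b]\to V$ be continuous paths of bounded variation whose signatures $S(\gamma_1)_{a,b},\dots,S(\gamma_n)_{a,b}$ are pairwise distinct. If $\phi:\mathbb{N}\cup\{0\}\to(0,\infty)$ satisfies $\sum_kC^k\phi(k)(k!)^{-2}<\infty$ for every $C>0$, then the matrix $K=\left(\langle S(\gamma_i)_{a,b},S(\gamma_j)_{a,b}\rangle_\phi\right)_{i,j=1,\dots,n}$ is positive definite.
   Context: $V$ is a finite-dimensional real inner product space, $\langle\cdot,\cdot\rangle_k$ the induced Hilbert–Schmidt inner product on $V^{\otimes k}$. Signature: $S(\gamma)_{a,b}=\sum_kS(\gamma)^k_{a,b}$, $S(\gamma)^0=1$, $S(\gamma)^k_{a,b}=\int_{a<u_1<\dots<u_k<b}d\gamma_{u_1}\otimes\cdots\otimes d\gamma_{u_k}$. $\langle x,y\rangle_\phi=\sum_k\phi(k)\langle x_k,y_k\rangle_k$. *)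

theory Defs
  imports "HOL-Analysis.Analysis"
begin

definition bounded_variation_on :: "(real \<Rightarrow> 'v::real_normed_vector) \<Rightarrow> real \<Rightarrow> real \<Rightarrow> bool" where
  "bounded_variation_on \<gamma> a b \<longleftrightarrow>
     (\<exists>M. \<forall>n (t::nat \<Rightarrow> real).
        t 0 = a \<and> t n = b \<and> (\<forall>j<n. t j \<le> t (Suc j)) \<longrightarrow>
        (\<Sum>j<n. norm (\<gamma> (t (Suc j)) - \<gamma> (t j))) \<le> M)"

definition has_RS_integral :: "(real \<Rightarrow> real) \<Rightarrow> (real \<Rightarrow> real) \<Rightarrow> real \<Rightarrow> real \<Rightarrow> real \<Rightarrow> bool" where
  "has_RS_integral f g a b I \<longleftrightarrow>
     (\<forall>\<epsilon>>0. \<exists>\<delta>>0. \<forall>n (t::nat \<Rightarrow> real) (s::nat \<Rightarrow> real).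
        t 0 = a \<and> t n = b \<and> (\<forall>j<n. t j < t (Suc j)) \<and>
        (\<forall>j<n. t j \<le> s j \<and> s j \<le> t (Suc j)) \<and>
        (\<forall>j<n. t (Suc j) - t j < \<delta>) \<longrightarrow>
        \<bar>(\<Sum>j<n. f (s j) * (g (t (Suc j)) - g (t j))) - I\<bar> < \<epsilon>)"

definition RS_integral :: "(real \<Rightarrow> real) \<Rightarrow> (real \<Rightarrow> real) \<Rightarrow> real \<Rightarrow> real \<Rightarrow> real" where
  "RS_integral f g a b = (THE I. has_RS_integral f g a b I)"

text \<open>Tensors in V^{\<otimes>k} are represented by their coordinates with respect to the
  orthonormal basis {e_1 \<otimes> ... \<otimes> e_k | e_i \<in> Basis}, i.e. as functions on words
  (lists) over Basis of length k. The iterated integral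
  int_{a<u_1<...<u_k<t} d\<gamma>^{e_1}_{u_1} ... d\<gamma>^{e_k}_{u_k} (with \<gamma>^e = \<gamma> \<bullet> e)
  is computed recursively; sig_rev takes the word in reversed order.\<close>

fun sig_rev :: "(real \<Rightarrow> 'v::euclidean_space) \<Rightarrow> real \<Rightarrow> 'v list \<Rightarrow> real \<Rightarrow> real" where
  "sig_rev \<gamma> a [] t = 1"
| "sig_rev \<gamma> a (e # w) t = RS_integral (\<lambda>u. sig_rev \<gamma> a w u) (\<lambda>u. \<gamma> u \<bullet> e) a t"

text \<open>The signature S(\<gamma>)_{a,b} as an element of the tensor algebra: coefficient of
  the basis tensor e_1 \<otimes> ... \<otimes> e_k for the word [e_1,...,e_k] over Basis
  (0 on words not over Basis). Its level-k part consists of the words of length k;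
  the empty word gives S^0 = 1.\<close>

definition signature :: "(real \<Rightarrow> 'v::euclidean_space) \<Rightarrow> real \<Rightarrow> real \<Rightarrow> 'v list \<Rightarrow> real" where
  "signature \<gamma> a b w = (if set w \<subseteq> Basis then sig_rev \<gamma> a (rev w) b else 0)"

definition HS_inner :: "nat \<Rightarrow> ('v::euclidean_space list \<Rightarrow> real) \<Rightarrow> ('v list \<Rightarrow> real) \<Rightarrow> real" where
  "HS_inner k x y = (\<Sum>w\<in>{w. length w = k \<and> set w \<subseteq> (Basis::'v set)}. x w * y w)"

definition phi_inner :: "(nat \<Rightarrow> real) \<Rightarrow> ('v::euclidean_space list \<Rightarrow> real) \<Rightarrow> ('v list \<Rightarrow> real) \<Rightarrow> real" where
  "phi_inner \<phi> x y = (\<Sum>k. \<phi> k * HS_inner k x y)"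

end

theory Submission
  imports Defs
begin


definition ptn :: "real \<Rightarrow> real \<Rightarrow> nat \<Rightarrow> (nat \<Rightarrow> real) \<Rightarrow> bool" where
  "ptn c d n t \<longleftrightarrow> t 0 = c \<and> t n = d \<and> (\<forall>j<n. t j \<le> t (Suc j))"

definition vsum :: "(real \<Rightarrow> real) \<Rightarrow> nat \<Rightarrow> (nat \<Rightarrow> real) \<Rightarrow> real" where
  "vsum g n t = (\<Sum>j<n. \<bar>g (t (Suc j)) - g (t j)\<bar>)"

definition Var :: "(real \<Rightarrow> real) \<Rightarrow> real \<Rightarrow> real \<Rightarrow> real" where
  "Var g c d = Sup {vsum g n t | n t. ptn c d n t}"

lemma ptn_mono: assumes "ptn c d n t" "i \<le> j" "j \<le> n" shows "t i \<le> t j"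
  using assms(2,3)
proof (induction j)
  case 0 then show ?case by simp
next
  case (Suc j)
  show ?case
  proof (cases "i = Suc j")
    case False
    then have "t i \<le> t j" using Suc by simp
    also have "t j \<le> t (Suc j)" using assms(1) Suc.prems unfolding ptn_def by simp
    finally show ?thesis .
  qed simp
qed

lemma ptn_range: assumes "ptn c d n t" "j \<le> n" shows "c \<le> t j" "t j \<le> d"
  using ptn_mono[OF assms(1), of 0 j] ptn_mono[OF assms(1), of j n] assms
  by (auto simp: ptn_def)

lemma ptn_le: "ptn c d n t \<Longrightarrow> c \<le> d"
  using ptn_range[of c d n t n] by simp

lemma vsum_nonneg: "0 \<le> vsum g n t"
  unfolding vsum_def by (intro sum_nonneg) auto

lemma ptn_trivial: "c \<le> d \<Longrightarrow> ptn c d 1 (\<lambda>j. if j = 0 then c else d)"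
  by (auto simp: ptn_def)

lemma vsum_trivial [simp]: "vsum g (Suc 0) (\<lambda>j. if j = 0 then c else d) = \<bar>g d - g c\<bar>"
  by (simp add: vsum_def)

definition pcat :: "nat \<Rightarrow> (nat \<Rightarrow> real) \<Rightarrow> (nat \<Rightarrow> real) \<Rightarrow> nat \<Rightarrow> real" where
  "pcat n1 t1 t2 j = (if j \<le> n1 then t1 j else t2 (j - n1))"

lemma ptn_pcat: assumes "ptn c d n1 t1" "ptn d e n2 t2"
  shows "ptn c e (n1 + n2) (pcat n1 t1 t2)"
  unfolding ptn_def
proof (intro conjI allI impI)
  show "pcat n1 t1 t2 0 = c" using assms(1) by (simp add: pcat_def ptn_def)
  show "pcat n1 t1 t2 (n1 + n2) = e" using assms by (cases "n2 = 0") (auto simp: pcat_def ptn_def)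
  fix j assume j: "j < n1 + n2"
  show "pcat n1 t1 t2 j \<le> pcat n1 t1 t2 (Suc j)"
  proof (cases "j < n1")
    case True then show ?thesis using assms(1) by (auto simp: pcat_def ptn_def)
  next
    case False
    then obtain k where k: "j = n1 + k" "k < n2" using j by (metis add_less_imp_less_left le_Suc_ex not_less)
    show ?thesis
    proof (cases "k = 0")
      case True then show ?thesis using assms k by (auto simp: pcat_def ptn_def)
    next
      case False then show ?thesis using assms k by (auto simp: pcat_def ptn_def Suc_diff_le)
    qed
  qed
qed

lemma vsum_pcat: assumes "ptn c d n1 t1" "ptn d e n2 t2"
  shows "vsum g (n1 + n2) (pcat n1 t1 t2) = vsum g n1 t1 + vsum g n2 t2"
proof -
  have "vsum g (n1 + n2) (pcat n1 t1 t2) =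
     (\<Sum>j<n1. \<bar>g (pcat n1 t1 t2 (Suc j)) - g (pcat n1 t1 t2 j)\<bar>) +
     (\<Sum>j\<in>{n1..<n1+n2}. \<bar>g (pcat n1 t1 t2 (Suc j)) - g (pcat n1 t1 t2 j)\<bar>)"
    unfolding vsum_def by (simp add: sum.atLeastLessThan_concat[symmetric] lessThan_atLeast0 )
  also have "(\<Sum>j<n1. \<bar>g (pcat n1 t1 t2 (Suc j)) - g (pcat n1 t1 t2 j)\<bar>) = vsum g n1 t1"
    unfolding vsum_def pcat_def by (intro sum.cong) auto
  also have "(\<Sum>j\<in>{n1..<n1+n2}. \<bar>g (pcat n1 t1 t2 (Suc j)) - g (pcat n1 t1 t2 j)\<bar>)
      = (\<Sum>j<n2. \<bar>g (pcat n1 t1 t2 (Suc (j + n1))) - g (pcat n1 t1 t2 (j + n1))\<bar>)"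
    using sum.shift_bounds_nat_ivl[of "\<lambda>j. \<bar>g (pcat n1 t1 t2 (Suc j)) - g (pcat n1 t1 t2 j)\<bar>" 0 n1 n2]
    by (simp add: lessThan_atLeast0 add.commute)
  also have "\<dots> = vsum g n2 t2"
    unfolding vsum_def pcat_def using assms by (intro sum.cong) (auto simp: ptn_def Suc_diff_le)
  finally show ?thesis .
qed

definition bv :: "(real \<Rightarrow> real) \<Rightarrow> real \<Rightarrow> real \<Rightarrow> bool" where
  "bv g a b \<longleftrightarrow> (\<exists>M. \<forall>n t. ptn a b n t \<longrightarrow> vsum g n t \<le> M)"

lemma bv_bdd: assumes "bv g a b" "a \<le> c" "d \<le> b"
  shows "bdd_above {vsum g n t | n t. ptn c d n t}"
proof -
  obtain M where M: "\<And>n t. ptn a b n t \<Longrightarrow> vsum g n t \<le> M" using assms(1) by (auto simp: bv_def)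
  have "vsum g n t \<le> M" if p: "ptn c d n t" for n t
  proof -
    let ?p1 = "\<lambda>j::nat. if j = 0 then a else c" and ?p3 = "\<lambda>j::nat. if j = 0 then d else b"
    have cd: "c \<le> d" using ptn_le[OF p] .
    have p1: "ptn a c 1 ?p1" using assms by (intro ptn_trivial)
    have p3: "ptn d b 1 ?p3" using assms by (intro ptn_trivial)
    have q: "ptn a d (1 + n) (pcat 1 ?p1 t)" by (rule ptn_pcat[OF p1 p])
    have "ptn a b ((1 + n) + 1) (pcat (1 + n) (pcat 1 ?p1 t) ?p3)" by (rule ptn_pcat[OF q p3])
    then have "vsum g ((1 + n) + 1) (pcat (1 + n) (pcat 1 ?p1 t) ?p3) \<le> M" by (rule M)
    moreover have "vsum g ((1 + n) + 1) (pcat (1 + n) (pcat 1 ?p1 t) ?p3) =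
       \<bar>g c - g a\<bar> + vsum g n t + \<bar>g b - g d\<bar>"
      using vsum_pcat[OF q p3, of g] vsum_pcat[OF p1 p, of g] by (simp add: vsum_trivial)
    ultimately show ?thesis by linarith
  qed
  then show ?thesis by (auto simp: bdd_above_def)
qed

lemma ptn_nonempty: "c \<le> d \<Longrightarrow> {vsum g n t | n t. ptn c d n t} \<noteq> {}"
  using ptn_trivial[of c d] by blast

lemma Var_upper: "bv g a b \<Longrightarrow> a \<le> c \<Longrightarrow> d \<le> b \<Longrightarrow> ptn c d n t \<Longrightarrow> vsum g n t \<le> Var g c d"
  unfolding Var_def by (rule cSup_upper) (auto intro: bv_bdd)

lemma Var_least: "c \<le> d \<Longrightarrow> (\<And>n t. ptn c d n t \<Longrightarrow> vsum g n t \<le> B) \<Longrightarrow> Var g c d \<le> B"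
  unfolding Var_def by (rule cSup_least) (use ptn_trivial in blast)+

lemma Var_approx: assumes "bv g a b" "a \<le> c" "c \<le> d" "d \<le> b" "e > 0"
  shows "\<exists>n t. ptn c d n t \<and> vsum g n t > Var g c d - e"
proof -
  have "Var g c d - e < Sup {vsum g n t | n t. ptn c d n t}" using assms(5) by (simp add: Var_def)
  from less_cSupD[OF ptn_nonempty[OF assms(3)] this] show ?thesis by auto
qed

lemma Var_ge_abs: "bv g a b \<Longrightarrow> a \<le> c \<Longrightarrow> c \<le> d \<Longrightarrow> d \<le> b \<Longrightarrow> \<bar>g d - g c\<bar> \<le> Var g c d"
  using Var_upper[OF _ _ _ ptn_trivial[of c d], of g a b] by (simp add: vsum_trivial)

lemma Var_nonneg: "bv g a b \<Longrightarrow> a \<le> c \<Longrightarrow> c \<le> d \<Longrightarrow> d \<le> b \<Longrightarrow> 0 \<le> Var g c d"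
  using Var_ge_abs[of g a b c d] by linarith

lemma Var_refl: "Var g c c = 0"
proof -
  have "vsum g n t \<le> 0" if "ptn c c n t" for n t
  proof -
    have "t j = c" if "j \<le> n" for j using ptn_range[OF \<open>ptn c c n t\<close> that] by simp
    then show ?thesis unfolding vsum_def by (simp add: Suc_leI)
  qed
  then have "Var g c c \<le> 0" by (intro Var_least) auto
  moreover have "0 \<le> Var g c c"
  proof -
    have b: "bdd_above {vsum g n t | n t. ptn c c n t}"
      using \<open>\<And>n t. ptn c c n t \<Longrightarrow> vsum g n t \<le> 0\<close> by (auto simp: bdd_above_def)
    have "vsum g 1 (\<lambda>j. if j = 0 then c else c) \<in> {vsum g n t | n t. ptn c c n t}"
      using ptn_trivial[of c c] by blast
    from cSup_upper[OF this b] show ?thesis by (simp add: Var_def vsum_def)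
  qed
  ultimately show ?thesis by simp
qed

lemma Var_super: assumes "bv g a b" "a \<le> c" "c \<le> d" "d \<le> e" "e \<le> b"
  shows "Var g c d + Var g d e \<le> Var g c e"
proof -
  have *: "vsum g n1 t1 + vsum g n2 t2 \<le> Var g c e" if "ptn c d n1 t1" "ptn d e n2 t2" for n1 t1 n2 t2
    using vsum_pcat[OF that, of g] Var_upper[OF assms(1,2,5) ptn_pcat[OF that]] by simp
  have "vsum g n1 t1 \<le> Var g c e - Var g d e" if "ptn c d n1 t1" for n1 t1
  proof -
    have "Var g d e \<le> Var g c e - vsum g n1 t1"
    proof (rule Var_least[OF assms(4)])
      fix n2 t2 assume "ptn d e n2 t2"
      from *[OF that this] show "vsum g n2 t2 \<le> Var g c e - vsum g n1 t1" by simp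
    qed
    then show ?thesis by linarith
  qed
  then have "Var g c d \<le> Var g c e - Var g d e" by (intro Var_least[OF assms(3)])
  then show ?thesis by linarith
qed

lemma Var_sub: assumes "bv g a b" "a \<le> c" "c \<le> d" "d \<le> e" "e \<le> b"
  shows "Var g c e \<le> Var g c d + Var g d e"
proof (rule Var_least)
  show "c \<le> e" using assms by linarith
  fix n t assume p: "ptn c e n t"
  let ?t1 = "\<lambda>j. min (t j) d" and ?t2 = "\<lambda>j. max (t j) d"
  have p1: "ptn c d n ?t1" using p assms unfolding ptn_def by (auto simp: min_def)
  have p2: "ptn d e n ?t2" using p assms unfolding ptn_def by (auto simp: max_def)
  have "vsum g n t \<le> vsum g n ?t1 + vsum g n ?t2"
    unfolding vsum_def sum.distrib[symmetric]
  proof (intro sum_mono)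
    fix j assume "j \<in> {..<n}"
    then have le: "t j \<le> t (Suc j)" using p by (auto simp: ptn_def)
    show "\<bar>g (t (Suc j)) - g (t j)\<bar> \<le> \<bar>g (min (t (Suc j)) d) - g (min (t j) d)\<bar> + \<bar>g (max (t (Suc j)) d) - g (max (t j) d)\<bar>"
    proof (cases "t (Suc j) \<le> d")
      case True then show ?thesis using le by (simp add: min_def max_def)
    next
      case False
      then show ?thesis
      proof (cases "t j \<le> d")
        case True then show ?thesis using False by (simp add: min_def max_def)
      next
        case False then show ?thesis using le by (simp add: min_def max_def)
      qed
    qed
  qed
  also have "\<dots> \<le> Var g c d + Var g d e"
    using Var_upper[OF assms(1,2) _ p1] Var_upper[OF assms(1) _ assms(5) p2] assms by linarith
  finally show "vsum g n t \<le> Var g c d + Var g d e" .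
qed

lemma clip_below:
  assumes p: "ptn c e n t" and x: "c < x" "x \<le> e" and gap: "\<And>j. j \<le> n \<Longrightarrow> c < t j \<Longrightarrow> x \<le> t j"
  shows "ptn x e n (\<lambda>j. max x (t j))" "vsum g n t - \<bar>g x - g c\<bar> \<le> vsum g n (\<lambda>j. max x (t j))"
proof -
  show "ptn x e n (\<lambda>j. max x (t j))" using p x unfolding ptn_def by (auto intro: max.mono)
  define K where "K = \<bar>g x - g c\<bar>"
  define ch where "ch j = (if t j = c then 1 else 0::real)" for j
  have trm: "\<bar>g (t (Suc j)) - g (t j)\<bar> - K * (ch j - ch (Suc j)) \<le> \<bar>g (max x (t (Suc j))) - g (max x (t j))\<bar>"
    if j: "j < n" for j
  proof -
    have le: "t j \<le> t (Suc j)" using p j by (auto simp: ptn_def)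
    have r1: "c \<le> t j" "c \<le> t (Suc j)" using ptn_range[OF p, of j] ptn_range[OF p, of "Suc j"] j by auto
    show ?thesis
    proof (cases "t j = c")
      case True
      show ?thesis
      proof (cases "t (Suc j) = c")
        case True then show ?thesis using \<open>t j = c\<close> by (simp add: ch_def)
      next
        case False
        then have "x \<le> t (Suc j)" using gap[of "Suc j"] r1 j by auto
        then show ?thesis using \<open>t j = c\<close> False x by (simp add: ch_def K_def max_def)
      qed
    next
      case False
      then have "x \<le> t j" "x \<le> t (Suc j)" using gap[of j] gap[of "Suc j"] r1 j le by auto
      then show ?thesis using False le r1 by (simp add: ch_def max_def)
    qed
  qed
  have "vsum g n t - K * (ch 0 - ch n) \<le> vsum g n (\<lambda>j. max x (t j))"
    unfolding vsum_def sum_lessThan_telescope'[of ch n, symmetric] sum_distrib_left sum_subtractf[symmetric]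
    using trm by (intro sum_mono) auto
  moreover have "K * (ch 0 - ch n) \<le> K" by (rule mult_left_le) (auto simp: ch_def K_def)
  ultimately show "vsum g n t - \<bar>g x - g c\<bar> \<le> vsum g n (\<lambda>j. max x (t j))"
    unfolding K_def by linarith
qed

lemma clip_above:
  assumes p: "ptn c d n t" and x: "x < d" "c \<le> x" and gap: "\<And>j. j \<le> n \<Longrightarrow> t j < d \<Longrightarrow> t j \<le> x"
  shows "ptn c x n (\<lambda>j. min x (t j))" "vsum g n t - \<bar>g d - g x\<bar> \<le> vsum g n (\<lambda>j. min x (t j))"
proof -
  show "ptn c x n (\<lambda>j. min x (t j))" using p x unfolding ptn_def by (auto intro: min.mono)
  define K where "K = \<bar>g d - g x\<bar>"
  define ch where "ch j = (if t j = d then 1 else 0::real)" for j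
  have trm: "\<bar>g (t (Suc j)) - g (t j)\<bar> - K * (ch (Suc j) - ch j) \<le> \<bar>g (min x (t (Suc j))) - g (min x (t j))\<bar>"
    if j: "j < n" for j
  proof -
    have le: "t j \<le> t (Suc j)" using p j by (auto simp: ptn_def)
    have r1: "t j \<le> d" "t (Suc j) \<le> d" using ptn_range[OF p, of j] ptn_range[OF p, of "Suc j"] j by auto
    show ?thesis
    proof (cases "t (Suc j) = d")
      case True
      show ?thesis
      proof (cases "t j = d")
        case True then show ?thesis using \<open>t (Suc j) = d\<close> by (simp add: ch_def)
      next
        case False
        then have "t j \<le> x" using gap[of j] r1 j by auto
        then show ?thesis using \<open>t (Suc j) = d\<close> False x by (simp add: ch_def K_def min_def) arith
      qed
    next
      case False
      then have "t j \<le> x" "t (Suc j) \<le> x" using gap[of j] gap[of "Suc j"] r1 j le by auto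
      then show ?thesis using False le r1 by (simp add: ch_def min_def)
    qed
  qed
  have "vsum g n t - K * (ch n - ch 0) \<le> vsum g n (\<lambda>j. min x (t j))"
    unfolding vsum_def sum_lessThan_telescope[of ch n, symmetric] sum_distrib_left sum_subtractf[symmetric]
    using trm by (intro sum_mono) auto
  moreover have "K * (ch n - ch 0) \<le> K" by (rule mult_left_le) (auto simp: ch_def K_def)
  ultimately show "vsum g n t - \<bar>g d - g x\<bar> \<le> vsum g n (\<lambda>j. min x (t j))"
    unfolding K_def by linarith
qed

lemma cont_at_pt:
  fixes g :: "real \<Rightarrow> real" and a b c e :: real
  assumes "continuous_on {a..b} g" "c \<in> {a..b}" "e > 0"
  obtains d where "d > 0" "\<And>y. y \<in> {a..b} \<Longrightarrow> \<bar>y - c\<bar> < d \<Longrightarrow> \<bar>g y - g c\<bar> < e"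
proof -
  from assms(1)[unfolded Elementary_Metric_Spaces.continuous_on_iff] assms(2,3)
  obtain d where "d > 0" "\<forall>y\<in>{a..b}. dist y c < d \<longrightarrow> dist (g y) (g c) < e" by blast
  then show thesis using that unfolding dist_real_def by blast
qed

lemma Var_right_small:
  assumes bv: "bv g a b" and c: "a \<le> c" "c < b" and cont: "continuous_on {a..b} g" and e: "e > 0"
  shows "\<exists>x. c < x \<and> x \<le> b \<and> Var g c x < e"
proof -
  obtain n t where p: "ptn c b n t" and vs: "vsum g n t > Var g c b - e/2"
    using Var_approx[OF bv c(1) _ order_refl, of "e/2"] c e by auto
  define A where "A = t ` {j. j \<le> n \<and> c < t j}"
  have fin: "finite A" unfolding A_def by simp
  have ne: "A \<noteq> {}" using p c unfolding A_def ptn_def by force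
  define m where "m = Min A"
  have mA: "m \<in> A" unfolding m_def using fin ne by simp
  have cm: "c < m" "m \<le> b" using mA ptn_range[OF p] unfolding A_def by auto
  have mle: "m \<le> t j" if "j \<le> n" "c < t j" for j
    unfolding m_def using fin that by (intro Min_le) (auto simp: A_def)
  obtain d where d: "d > 0" "\<And>y. y \<in> {a..b} \<Longrightarrow> \<bar>y - c\<bar> < d \<Longrightarrow> \<bar>g y - g c\<bar> < e/2"
    using cont_at_pt[OF cont, of c "e/2"] c e by auto
  define x where "x = min m (c + d/2)"
  have x: "c < x" "x \<le> b" "x \<le> m" using cm d unfolding x_def by auto
  have gx: "\<bar>g x - g c\<bar> < e/2" using d(2)[of x] x c d(1) unfolding x_def by auto
  have gap: "\<And>j. j \<le> n \<Longrightarrow> c < t j \<Longrightarrow> x \<le> t j" using mle x by force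
  note cl = clip_below(1)[OF p x(1,2) gap] clip_below(2)[OF p x(1,2) gap, of g]
  have "Var g x b \<ge> vsum g n (\<lambda>j. max x (t j))"
    using Var_upper[OF bv _ order_refl cl(1)] x c by linarith
  then have "Var g x b > Var g c b - e" using cl(2) gx vs by linarith
  moreover have "Var g c x + Var g x b \<le> Var g c b" using Var_super[OF bv c(1) _ x(2) order_refl] x by linarith
  ultimately show ?thesis using x by (intro exI[of _ x]) auto
qed

lemma Var_left_close:
  assumes bv: "bv g a b" and d: "a < d" "d \<le> b" and cont: "continuous_on {a..b} g" and e: "e > 0"
  shows "\<exists>x. a \<le> x \<and> x < d \<and> Var g a x > Var g a d - e"
proof -
  obtain n t where p: "ptn a d n t" and vs: "vsum g n t > Var g a d - e/2"
    using Var_approx[OF bv order_refl _ d(2), of "e/2"] d e by auto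
  define A where "A = t ` {j. j \<le> n \<and> t j < d}"
  have fin: "finite A" unfolding A_def by simp
  have ne: "A \<noteq> {}" using p d unfolding A_def ptn_def by force
  define m where "m = Max A"
  have mA: "m \<in> A" unfolding m_def using fin ne by simp
  have cm: "m < d" "a \<le> m" using mA ptn_range[OF p] unfolding A_def by auto
  have mle: "t j \<le> m" if "j \<le> n" "t j < d" for j
    unfolding m_def using fin that by (intro Max_ge) (auto simp: A_def)
  obtain r where r: "r > 0" "\<And>y. y \<in> {a..b} \<Longrightarrow> \<bar>y - d\<bar> < r \<Longrightarrow> \<bar>g y - g d\<bar> < e/2"
    using cont_at_pt[OF cont, of d "e/2"] d e by auto
  define x where "x = max m (d - r/2)"
  have x: "x < d" "a \<le> x" "m \<le> x" using cm r unfolding x_def by auto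
  have gx: "\<bar>g d - g x\<bar> < e/2" using r(2)[of x] x d r(1) unfolding x_def by (auto simp: abs_minus_commute)
  have gap: "\<And>j. j \<le> n \<Longrightarrow> t j < d \<Longrightarrow> t j \<le> x" using mle x by force
  note cl = clip_above(1)[OF p x(1,2) gap] clip_above(2)[OF p x(1,2) gap, of g]
  have "Var g a x \<ge> vsum g n (\<lambda>j. min x (t j))"
    using Var_upper[OF bv order_refl _ cl(1)] x d by linarith
  then show ?thesis using cl(2) gx vs x by (intro exI[of _ x]) auto
qed

lemma Var_mono_abs: assumes "bv g a b" "a \<le> x" "x \<le> y" "y \<le> b"
  shows "Var g a x + \<bar>g y - g x\<bar> \<le> Var g a y"
  using Var_super[OF assms(1) order_refl assms(2,3,4)] Var_ge_abs[OF assms(1) _ assms(3,4)] assms(2)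
  by linarith

lemma Var_cont: assumes bv: "bv g a b" and cont: "continuous_on {a..b} g"
  shows "continuous_on {a..b} (\<lambda>x. Var g a x)"
  unfolding continuous_on_iff dist_real_def
proof (intro ballI allI impI)
  fix x e :: real assume x: "x \<in> {a..b}" and e: "e > 0"
  obtain d1 where d1: "d1 > 0" "\<And>y. x \<le> y \<Longrightarrow> y < x + d1 \<Longrightarrow> y \<le> b \<Longrightarrow> Var g a y - Var g a x < e"
  proof (cases "x < b")
    case True
    then obtain x' where x': "x < x'" "x' \<le> b" "Var g x x' < e" using Var_right_small[OF bv _ _ cont e] x by auto
    show ?thesis
    proof (rule that[of "x' - x"])
      fix y assume y: "x \<le> y" "y < x + (x' - x)" "y \<le> b"
      have "Var g a y \<le> Var g a x + Var g x y" using Var_sub[OF bv _ _ y(1,3)] x by auto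
      moreover have "Var g x y + Var g y x' \<le> Var g x x'" using Var_super[OF bv _ y(1) _ x'(2)] x y by auto
      moreover have "0 \<le> Var g y x'" using Var_nonneg[OF bv _ _ x'(2)] x y by auto
      ultimately show "Var g a y - Var g a x < e" using x' by linarith
    qed (use x' in auto)
  next
    case False
    show ?thesis
    proof (rule that[of 1])
      fix y assume "x \<le> y" "y < x + 1" "y \<le> b"
      then have "y = x" using False x by auto
      then show "Var g a y - Var g a x < e" using e by simp
    qed simp
  qed
  obtain d2 where d2: "d2 > 0" "\<And>y. y \<le> x \<Longrightarrow> x - d2 < y \<Longrightarrow> a \<le> y \<Longrightarrow> Var g a x - Var g a y < e"
  proof (cases "a < x")
    case True
    then obtain x' where x': "a \<le> x'" "x' < x" "Var g a x' > Var g a x - e" using Var_left_close[OF bv _ _ cont e] x by auto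
    show ?thesis
    proof (rule that[of "x - x'"])
      fix y assume y: "y \<le> x" "x - (x - x') < y" "a \<le> y"
      have "Var g a x' \<le> Var g a y" using Var_mono_abs[OF bv x'(1), of y] y x by auto
      then show "Var g a x - Var g a y < e" using x' by linarith
    qed (use x' in auto)
  next
    case False
    show ?thesis
    proof (rule that[of 1])
      fix y assume "y \<le> x" "x - 1 < y" "a \<le> y"
      then have "y = x" using False x by auto
      then show "Var g a x - Var g a y < e" using e by simp
    qed simp
  qed
  show "\<exists>d>0. \<forall>y\<in>{a..b}. \<bar>y - x\<bar> < d \<longrightarrow> \<bar>Var g a y - Var g a x\<bar> < e"
  proof (intro exI[of _ "min d1 d2"] conjI ballI impI)
    fix y assume y: "y \<in> {a..b}" "\<bar>y - x\<bar> < min d1 d2"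
    show "\<bar>Var g a y - Var g a x\<bar> < e"
    proof (cases "x \<le> y")
      case True
      have "Var g a x \<le> Var g a y" using Var_mono_abs[OF bv, of x y] True x y by auto
      then show ?thesis using d1(2)[of y] True y by auto
    next
      case False
      have "Var g a y \<le> Var g a x" using Var_mono_abs[OF bv, of y x] False x y by auto
      then show ?thesis using d2(2)[of y] False y by auto
    qed
  qed (use d1 d2 in auto)
qed



definition Phi :: "(real \<Rightarrow> real) \<Rightarrow> real \<Rightarrow> (real \<Rightarrow> real) \<Rightarrow> real \<Rightarrow> real" where
  "Phi G a h x = (LINT u:{a<..x}|interval_measure G. h u)"

definition mc :: "(real \<Rightarrow> real) \<Rightarrow> bool" where
  "mc G \<longleftrightarrow> (\<forall>x y. x \<le> y \<longrightarrow> G x \<le> G y) \<and> continuous_on UNIV G"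

lemma mc_meas:
  assumes "mc G" "c \<le> d"
  shows "emeasure (interval_measure G) {c<..d} = G d - G c"
    "measure (interval_measure G) {c<..d} = G d - G c"
proof -
  have ic: "isCont G x" for x
    using assms(1) continuous_on_eq_continuous_at[of UNIV G] unfolding mc_def by blast
  have rc: "continuous (at_right x) G" for x
    by (rule continuous_at_imp_continuous_at_within[OF ic])
  have mo: "\<And>x y. x \<le> y \<Longrightarrow> G x \<le> G y" using assms(1) unfolding mc_def by blast
  show "emeasure (interval_measure G) {c<..d} = G d - G c"
    by (rule emeasure_interval_measure_Ioc[OF assms(2) mo rc])
  show "measure (interval_measure G) {c<..d} = G d - G c"
    by (rule measure_interval_measure_Ioc[OF assms(2) mo rc])
qed

lemma mc_fin: assumes "mc G" shows "emeasure (interval_measure G) {c<..d} < \<infinity>"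
proof (cases "c \<le> d")
  case True then show ?thesis using mc_meas(1)[OF assms True] by simp
next
  case False then show ?thesis by simp
qed

lemma cont_bound:
  fixes h :: "real \<Rightarrow> real"
  assumes "continuous_on {c..d} h"
  obtains B where "B > 0" "\<And>x. x \<in> {c..d} \<Longrightarrow> \<bar>h x\<bar> \<le> B"
proof -
  have "bounded (h ` {c..d})" by (intro compact_imp_bounded compact_continuous_image assms compact_Icc)
  then obtain B where "B > 0" "\<forall>x\<in>h ` {c..d}. norm x \<le> B" unfolding bounded_pos by blast
  then show thesis using that by auto
qed

lemma int_cont:
  fixes h :: "real \<Rightarrow> real"
  assumes "mc G" "continuous_on {c..d} h"
  shows "set_integrable (interval_measure G) {c<..d} h"
proof -
  obtain B where B: "B > 0" "\<And>x. x \<in> {c..d} \<Longrightarrow> \<bar>h x\<bar> \<le> B" using cont_bound[OF assms(2)] by blast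
  have cont': "continuous_on {c<..d} h" using assms(2) by (rule continuous_on_subset) auto
  have meas: "(\<lambda>x. indicator {c<..d} x *\<^sub>R h x) \<in> borel_measurable (interval_measure G)"
  proof -
    have "(\<lambda>x. indicator {c<..d} x *\<^sub>R h x) \<in> borel_measurable borel"
      by (rule borel_measurable_continuous_on_indicator[OF _ cont']) simp
    then show ?thesis using measurable_cong_sets[OF sets_interval_measure[of G] refl, where 'b = real] by blast
  qed
  show ?thesis unfolding set_integrable_def
  proof (rule integrableI_bounded_set[where A = "{c<..d}" and B = B])
    show "{c<..d} \<in> sets (interval_measure G)" by simp
    show "emeasure (interval_measure G) {c<..d} < \<infinity>" by (rule mc_fin[OF assms(1)])
    show "AE x in interval_measure G. x \<in> {c<..d} \<longrightarrow> norm (indicator {c<..d} x *\<^sub>R h x) \<le> B"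
    proof (intro AE_I2 impI)
      fix x assume "x \<in> {c<..d}"
      then show "norm (indicator {c<..d} x *\<^sub>R h x) \<le> B" using B(2)[of x] by simp
    qed
    show "AE x in interval_measure G. x \<notin> {c<..d} \<longrightarrow> indicator {c<..d} x *\<^sub>R h x = 0"
      by (intro AE_I2) simp
  qed (rule meas)
qed

lemma int_bound:
  fixes h :: "real \<Rightarrow> real"
  assumes "mc G" "continuous_on {c..d} h" "c \<le> d" "\<And>x. x \<in> {c<..d} \<Longrightarrow> \<bar>h x\<bar> \<le> C"
  shows "\<bar>LINT u:{c<..d}|interval_measure G. h u\<bar> \<le> C * (G d - G c)"
proof -
  have i1: "set_integrable (interval_measure G) {c<..d} h" by (rule int_cont[OF assms(1,2)])
  have i2: "set_integrable (interval_measure G) {c<..d} (\<lambda>_. C)" by (rule int_cont[OF assms(1)]) simp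
  have "\<bar>LINT u:{c<..d}|interval_measure G. h u\<bar> \<le> (LINT u:{c<..d}|interval_measure G. \<bar>h u\<bar>)"
    using set_integral_norm_bound[OF i1] by simp
  also have "\<dots> \<le> (LINT u:{c<..d}|interval_measure G. C)"
    by (rule set_integral_mono[OF set_integrable_abs[OF i1] i2]) (use assms(4) in auto)
  also have "\<dots> = C * (G d - G c)"
    using set_integral_const[of "{c<..d}" "interval_measure G" C] mc_fin[OF assms(1), of c d] mc_meas[OF assms(1,3)]
    by simp
  finally show ?thesis .
qed

lemma Phi_diff:
  assumes "mc G" "continuous_on {a..b} h" "a \<le> x" "x \<le> y" "y \<le> b"
  shows "Phi G a h y - Phi G a h x = (LINT u:{x<..y}|interval_measure G. h u)"
proof -
  have "{a<..y} = {a<..x} \<union> {x<..y}" using assms by auto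
  moreover have "set_integrable (interval_measure G) {a<..x} h"
    by (rule int_cont[OF assms(1)]) (rule continuous_on_subset[OF assms(2)], use assms in auto)
  moreover have "set_integrable (interval_measure G) {x<..y} h"
    by (rule int_cont[OF assms(1)]) (rule continuous_on_subset[OF assms(2)], use assms in auto)
  ultimately have "(LINT u:{a<..y}|interval_measure G. h u) = (LINT u:{a<..x}|interval_measure G. h u) + (LINT u:{x<..y}|interval_measure G. h u)"
    by (metis set_integral_Un Int_commute greaterThanAtMost_iff disjoint_iff order_less_le_trans  not_le)
  then show ?thesis unfolding Phi_def by simp
qed

lemma Phi_a [simp]: "Phi G a h a = 0"
  by (simp add: Phi_def set_lebesgue_integral_def)

lemma Phi_one: assumes "mc G" "a \<le> x" shows "Phi G a (\<lambda>_. 1) x = G x - G a"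
  using set_integral_const[of "{a<..x}" "interval_measure G" "1::real"] mc_fin[OF assms(1), of a x] mc_meas[OF assms]
  by (simp add: Phi_def)

lemma Phi_cont:
  assumes "mc G" "continuous_on {a..b} h"
  shows "continuous_on {a..b} (Phi G a h)"
proof -
  obtain B where B: "B > 0" "\<And>x. x \<in> {a..b} \<Longrightarrow> \<bar>h x\<bar> \<le> B" using cont_bound[OF assms(2)] by blast
  have ucG: "uniformly_continuous_on {a..b} G"
    using assms(1) unfolding mc_def by (intro compact_uniformly_continuous compact_Icc) (auto intro: continuous_on_subset)
  have key: "\<bar>Phi G a h y - Phi G a h x\<bar> \<le> B * (G y - G x)" if "a \<le> x" "x \<le> y" "y \<le> b" for x y
    using Phi_diff[OF assms that] int_bound[OF assms(1) _ that(2), of h B] B that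
      continuous_on_subset[OF assms(2), of "{x..y}"] by auto
  show ?thesis unfolding continuous_on_iff dist_real_def
  proof (intro ballI allI impI)
    fix x e :: real assume x: "x \<in> {a..b}" and e: "e > 0"
    obtain d where d: "d > 0" "\<And>y z. y \<in> {a..b} \<Longrightarrow> z \<in> {a..b} \<Longrightarrow> \<bar>y - z\<bar> < d \<Longrightarrow> \<bar>G y - G z\<bar> < e / B"
      using ucG[unfolded uniformly_continuous_on_def dist_real_def, rule_format, of "e/B"] e B(1)
      by (metis divide_pos_pos)
    show "\<exists>d>0. \<forall>y\<in>{a..b}. \<bar>y - x\<bar> < d \<longrightarrow> \<bar>Phi G a h y - Phi G a h x\<bar> < e"
    proof (intro exI[of _ d] conjI ballI impI)
      fix y assume y: "y \<in> {a..b}" "\<bar>y - x\<bar> < d"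
      have gyx: "\<bar>G y - G x\<bar> < e / B" using d(2)[OF y(1) x y(2)] .
      show "\<bar>Phi G a h y - Phi G a h x\<bar> < e"
      proof (cases "x \<le> y")
        case True
        then have "\<bar>Phi G a h y - Phi G a h x\<bar> \<le> B * (G y - G x)" using key x y by auto
        also have "\<dots> < B * (e / B)" using gyx B(1) True by (intro mult_strict_left_mono) auto
        finally show ?thesis using B(1) by simp
      next
        case False
        then have "\<bar>Phi G a h x - Phi G a h y\<bar> \<le> B * (G x - G y)" using key x y by auto
        also have "\<dots> < B * (e / B)" using gyx B(1) False by (intro mult_strict_left_mono) auto
        finally show ?thesis using B(1) by (simp add: abs_minus_commute)
      qed
    qed (use d in auto)
  qed
qed



definition tp :: "real \<Rightarrow> real \<Rightarrow> nat \<Rightarrow> (nat \<Rightarrow> real) \<Rightarrow> (nat \<Rightarrow> real) \<Rightarrow> real \<Rightarrow> bool" where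
  "tp a b n t s d \<longleftrightarrow> t 0 = a \<and> t n = b \<and> (\<forall>j<n. t j < t (Suc j)) \<and>
        (\<forall>j<n. t j \<le> s j \<and> s j \<le> t (Suc j)) \<and> (\<forall>j<n. t (Suc j) - t j < d)"

definition rss :: "(real \<Rightarrow> real) \<Rightarrow> (real \<Rightarrow> real) \<Rightarrow> nat \<Rightarrow> (nat \<Rightarrow> real) \<Rightarrow> (nat \<Rightarrow> real) \<Rightarrow> real" where
  "rss f g n t s = (\<Sum>j<n. f (s j) * (g (t (Suc j)) - g (t j)))"

lemma has_RS_iff: "has_RS_integral f g a b I \<longleftrightarrow>
   (\<forall>e>0. \<exists>d>0. \<forall>n t s. tp a b n t s d \<longrightarrow> \<bar>rss f g n t s - I\<bar> < e)"
  unfolding has_RS_integral_def tp_def rss_def by blast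

lemma tp_ptn: "tp a b n t s d \<Longrightarrow> ptn a b n t"
  unfolding tp_def ptn_def by (auto simp: less_imp_le)

lemma tp_range: assumes "tp a b n t s d" "j < n"
  shows "a \<le> t j" "t (Suc j) \<le> b" "t j \<le> s j" "s j \<le> t (Suc j)" "t j < t (Suc j)" "t (Suc j) - t j < d"
  using ptn_range[OF tp_ptn[OF assms(1)], of j] ptn_range[OF tp_ptn[OF assms(1)], of "Suc j"] assms
  unfolding tp_def by auto

lemma rss_telescope: fixes g :: "real \<Rightarrow> real" shows "(\<Sum>j<n. g (t (Suc j)) - g (t j)) = g (t n) - g (t 0)"
  by (rule sum_lessThan_telescope)

lemma L2:
  assumes G: "mc G" and ab: "a \<le> b" and h: "continuous_on {a..b} h" and k: "continuous_on {a..b} k"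
    and e: "e > 0"
  shows "\<exists>d>0. \<forall>n t s. tp a b n t s d \<longrightarrow>
            \<bar>rss k (Phi G a h) n t s - Phi G a (\<lambda>u. k u * h u) b\<bar> < e"
proof -
  obtain B where B: "B > 0" "\<And>x. x \<in> {a..b} \<Longrightarrow> \<bar>h x\<bar> \<le> B" using cont_bound[OF h] by blast
  have Gab: "G a \<le> G b" using G ab by (auto simp: mc_def)
  define \<eta> where "\<eta> = e / (B * (G b - G a + 1))"
  have \<eta>: "\<eta> > 0" unfolding \<eta>_def using e B Gab by (auto intro!: divide_pos_pos)
  have uc: "uniformly_continuous_on {a..b} k" by (intro compact_uniformly_continuous k compact_Icc)
  obtain d where d: "d > 0" "\<And>x y. x \<in> {a..b} \<Longrightarrow> y \<in> {a..b} \<Longrightarrow> \<bar>x - y\<bar> < d \<Longrightarrow> \<bar>k x - k y\<bar> < \<eta>"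
    using uc[unfolded uniformly_continuous_on_def dist_real_def, rule_format, OF \<eta>] by metis
  have kh: "continuous_on {a..b} (\<lambda>u. k u * h u)" by (intro continuous_intros k h)
  show ?thesis
  proof (intro exI[of _ d] conjI allI impI)
    fix n t s assume p: "tp a b n t s d"
    note r = tp_range[OF p]
    have t0: "t 0 = a" and tn: "t n = b" using p by (auto simp: tp_def)
    have "Phi G a (\<lambda>u. k u * h u) b = (\<Sum>j<n. Phi G a (\<lambda>u. k u * h u) (t (Suc j)) - Phi G a (\<lambda>u. k u * h u) (t j))"
      by (simp add: rss_telescope t0 tn)
    then have "rss k (Phi G a h) n t s - Phi G a (\<lambda>u. k u * h u) b =
       (\<Sum>j<n. k (s j) * (Phi G a h (t (Suc j)) - Phi G a h (t j)) - (Phi G a (\<lambda>u. k u * h u) (t (Suc j)) - Phi G a (\<lambda>u. k u * h u) (t j)))"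
      unfolding rss_def by (simp add: sum_subtractf)
    also have "\<dots> = (\<Sum>j<n. LINT u:{t j<..t (Suc j)}|interval_measure G. (k (s j) * h u - k u * h u))"
    proof (intro sum.cong refl)
      fix j assume j: "j \<in> {..<n}"
      have c1: "continuous_on {t j..t (Suc j)} h" using r[of j] j by (intro continuous_on_subset[OF h]) auto
      have c2: "continuous_on {t j..t (Suc j)} (\<lambda>u. k u * h u)" using r[of j] j by (intro continuous_on_subset[OF kh]) auto
      have i1: "set_integrable (interval_measure G) {t j<..t (Suc j)} h" by (rule int_cont[OF G c1])
      have i2: "set_integrable (interval_measure G) {t j<..t (Suc j)} (\<lambda>u. k u * h u)" by (rule int_cont[OF G c2])
      have i1': "set_integrable (interval_measure G) {t j<..t (Suc j)} (\<lambda>u. k (s j) * h u)"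
        by (rule set_integrable_mult_right) (rule i1)
      show "k (s j) * (Phi G a h (t (Suc j)) - Phi G a h (t j)) - (Phi G a (\<lambda>u. k u * h u) (t (Suc j)) - Phi G a (\<lambda>u. k u * h u) (t j)) =
         (LINT u:{t j<..t (Suc j)}|interval_measure G. (k (s j) * h u - k u * h u))"
        using Phi_diff[OF G h r(1)[OF j[simplified]] less_imp_le[OF r(5)[OF j[simplified]]] r(2)[OF j[simplified]]]
          Phi_diff[OF G kh r(1)[OF j[simplified]] less_imp_le[OF r(5)[OF j[simplified]]] r(2)[OF j[simplified]]]
          set_integral_diff(2)[OF i1' i2]
        by simp
    qed
    finally have eq: "rss k (Phi G a h) n t s - Phi G a (\<lambda>u. k u * h u) b = \<dots>" .
    have bnd: "\<bar>LINT u:{t j<..t (Suc j)}|interval_measure G. (k (s j) * h u - k u * h u)\<bar> \<le> (\<eta> * B) * (G (t (Suc j)) - G (t j))"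
      if j: "j < n" for j
    proof (rule int_bound[OF G])
      show "continuous_on {t j..t (Suc j)} (\<lambda>u. k (s j) * h u - k u * h u)"
        using r[OF j] by (intro continuous_intros continuous_on_subset[OF h] continuous_on_subset[OF k]) auto
      show "t j \<le> t (Suc j)" using r[OF j] by simp
      fix u assume u: "u \<in> {t j<..t (Suc j)}"
      have ua: "u \<in> {a..b}" "s j \<in> {a..b}" using u r[OF j] by auto
      have "\<bar>s j - u\<bar> < d" using u r[OF j] by auto
      then have "\<bar>k (s j) - k u\<bar> \<le> \<eta>" using d(2)[OF ua(2,1)] by simp
      moreover have "\<bar>h u\<bar> \<le> B" using B(2) ua by simp
      ultimately have "\<bar>k (s j) - k u\<bar> * \<bar>h u\<bar> \<le> \<eta> * B" by (intro mult_mono) auto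
      then show "\<bar>k (s j) * h u - k u * h u\<bar> \<le> \<eta> * B" by (simp add: left_diff_distrib[symmetric] abs_mult)
    qed
    have "\<bar>rss k (Phi G a h) n t s - Phi G a (\<lambda>u. k u * h u) b\<bar> \<le> (\<Sum>j<n. (\<eta> * B) * (G (t (Suc j)) - G (t j)))"
      unfolding eq by (rule order_trans[OF sum_abs]) (intro sum_mono bnd, simp)
    also have "\<dots> = (\<eta> * B) * (G b - G a)" by (simp add: sum_distrib_left[symmetric] rss_telescope t0 tn)
    also have "\<dots> < e"
    proof -
      have "(\<eta> * B) * (G b - G a) = e * (B * (G b - G a)) / (B * (G b - G a + 1))" unfolding \<eta>_def by simp
      also have "\<dots> < e" using e B Gab by (simp add: divide_less_eq)
      finally show ?thesis .
    qed
    finally show "\<bar>rss k (Phi G a h) n t s - Phi G a (\<lambda>u. k u * h u) b\<bar> < e" .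
  qed (rule d(1))
qed



section \<open>General facts on RS integrals\<close>

lemma abs_half_add:
  fixes x y i1 i2 e :: real
  assumes "\<bar>x - i1\<bar> < e/2" "\<bar>y - i2\<bar> < e/2"
  shows "\<bar>(x + y) - (i1 + i2)\<bar> < e"
  using assms unfolding abs_less_iff by linarith

lemma abs_two:
  fixes r i j e :: real
  assumes "\<bar>r - i\<bar> < e" "\<bar>r - j\<bar> < e"
  shows "\<bar>i - j\<bar> < 2 * e"
  using assms unfolding abs_less_iff by linarith

lemma fine_exists:
  fixes a b d :: real
  assumes "a \<le> b" "d > 0"
  shows "\<exists>n t. t 0 = a \<and> t n = b \<and> (\<forall>j<n. t j < t (Suc j)) \<and> (\<forall>j<n. t (Suc j) - t j < d)"
proof (cases "a = b")
  case True then show ?thesis by (intro exI[of _ 0] exI[of _ "\<lambda>_. a"]) simp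
next
  case False
  then have ab: "a < b" using assms by simp
  obtain n :: nat where n: "(b - a) / d < n" using reals_Archimedean2 by blast
  have npos: "n > 0" using n ab assms(2) by (metis divide_pos_pos diff_gt_0_iff_gt of_nat_0_less_iff order.strict_trans)
  define c where "c = (b - a) / real n"
  define t where "t j = a + real j * c" for j
  have step: "t (Suc j) - t j = c" for j unfolding t_def by (simp add: algebra_simps)
  have "c < d" using n npos assms(2) ab unfolding c_def by (simp add: field_simps mult.commute)
  moreover have "c > 0" using ab npos unfolding c_def by simp
  moreover have "t n = b" using npos unfolding t_def c_def by simp
  moreover have "t j < t (Suc j)" for j using step[of j] \<open>c > 0\<close> by linarith
  moreover have "t 0 = a" by (simp add: t_def)
  ultimately show ?thesis using ab npos
    by (intro exI[of _ n] exI[of _ t]) (auto simp: step)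
qed

lemma fine_tp:
  fixes a b d :: real
  assumes "a \<le> b" "d > 0"
  shows "\<exists>n t. tp a b n t t d \<and> tp a b n t (\<lambda>j. t (Suc j)) d"
proof -
  obtain n t where "t 0 = a" "t n = b" "\<forall>j<n. t j < t (Suc j)" "\<forall>j<n. t (Suc j) - t j < d"
    using fine_exists[OF assms] by blast
  then show ?thesis unfolding tp_def by (intro exI[of _ n] exI[of _ t]) (auto simp: less_imp_le)
qed

lemma RS_unique:
  assumes "has_RS_integral f g a b I" "has_RS_integral f g a b J" "a \<le> b"
  shows "I = J"
proof (rule ccontr)
  assume ne: "I \<noteq> J"
  define e where "e = \<bar>I - J\<bar> / 2"
  have e: "e > 0" using ne by (simp add: e_def)
  obtain d1 where d1: "d1 > 0" "\<And>n t s. tp a b n t s d1 \<Longrightarrow> \<bar>rss f g n t s - I\<bar> < e"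
    using assms(1) e unfolding has_RS_iff by blast
  obtain d2 where d2: "d2 > 0" "\<And>n t s. tp a b n t s d2 \<Longrightarrow> \<bar>rss f g n t s - J\<bar> < e"
    using assms(2) e unfolding has_RS_iff by blast
  obtain n t where p: "tp a b n t t (min d1 d2)" using fine_tp[OF assms(3), of "min d1 d2"] d1 d2 by auto
  have "tp a b n t t d1" "tp a b n t t d2" using p unfolding tp_def by auto
  then have "\<bar>I - J\<bar> < 2 * e" using d1(2) d2(2) abs_two by blast
  moreover have "\<bar>I - J\<bar> = 2 * e" using e_def by simp
  ultimately show False by linarith
qed

lemma RS_integral_eq: "has_RS_integral f g a b I \<Longrightarrow> a \<le> b \<Longrightarrow> RS_integral f g a b = I"
  unfolding RS_integral_def using RS_unique by blast

lemma has_RS_cong: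
  assumes "has_RS_integral f g a b I" "\<And>x. x \<in> {a..b} \<Longrightarrow> f x = f' x" "\<And>x. x \<in> {a..b} \<Longrightarrow> g x - g a = g' x - g' a"
  shows "has_RS_integral f' g' a b I"
  unfolding has_RS_iff
proof (intro allI impI)
  fix e :: real assume e: "e > 0"
  then obtain d where d: "d > 0" "\<And>n t s. tp a b n t s d \<Longrightarrow> \<bar>rss f g n t s - I\<bar> < e"
    using assms(1) unfolding has_RS_iff by blast
  show "\<exists>d>0. \<forall>n t s. tp a b n t s d \<longrightarrow> \<bar>rss f' g' n t s - I\<bar> < e"
  proof (intro exI[of _ d] conjI allI impI)
    fix n t s assume p: "tp a b n t s d"
    have "rss f g n t s = rss f' g' n t s" unfolding rss_def
    proof (intro sum.cong refl)
      fix j assume "j \<in> {..<n}"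
      then have r: "a \<le> t j" "t (Suc j) \<le> b" "t j \<le> s j" "s j \<le> t (Suc j)" "t j < t (Suc j)"
        using tp_range[OF p] by auto
      have "g (t (Suc j)) - g (t j) = (g (t (Suc j)) - g a) - (g (t j) - g a)" by simp
      also have "\<dots> = (g' (t (Suc j)) - g' a) - (g' (t j) - g' a)" using assms(3) r by simp
      finally show "f (s j) * (g (t (Suc j)) - g (t j)) = f' (s j) * (g' (t (Suc j)) - g' (t j))"
        using assms(2)[of "s j"] r by simp
    qed
    then show "\<bar>rss f' g' n t s - I\<bar> < e" using d(2)[OF p] by simp
  qed (rule d(1))
qed

lemma has_RS_zero: "has_RS_integral (\<lambda>_. 0) g a b 0"
  unfolding has_RS_iff rss_def by auto

lemma has_RS_add:
  assumes "has_RS_integral f1 g a b I1" "has_RS_integral f2 g a b I2"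
  shows "has_RS_integral (\<lambda>x. f1 x + f2 x) g a b (I1 + I2)"
  unfolding has_RS_iff
proof (intro allI impI)
  fix e :: real assume e: "e > 0"
  obtain d1 where d1: "d1 > 0" "\<And>n t s. tp a b n t s d1 \<Longrightarrow> \<bar>rss f1 g n t s - I1\<bar> < e/2"
    using assms(1) e unfolding has_RS_iff by (meson half_gt_zero)
  obtain d2 where d2: "d2 > 0" "\<And>n t s. tp a b n t s d2 \<Longrightarrow> \<bar>rss f2 g n t s - I2\<bar> < e/2"
    using assms(2) e unfolding has_RS_iff by (meson half_gt_zero)
  show "\<exists>d>0. \<forall>n t s. tp a b n t s d \<longrightarrow> \<bar>rss (\<lambda>x. f1 x + f2 x) g n t s - (I1 + I2)\<bar> < e"
  proof (intro exI[of _ "min d1 d2"] conjI allI impI)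
    fix n t s assume p: "tp a b n t s (min d1 d2)"
    have "tp a b n t s d1" "tp a b n t s d2" using p unfolding tp_def by auto
    moreover have "rss (\<lambda>x. f1 x + f2 x) g n t s = rss f1 g n t s + rss f2 g n t s"
      unfolding rss_def by (simp add: distrib_right sum.distrib)
    ultimately show "\<bar>rss (\<lambda>x. f1 x + f2 x) g n t s - (I1 + I2)\<bar> < e" using d1(2) d2(2) abs_half_add by metis
  qed (use d1 d2 in auto)
qed

lemma has_RS_sum:
  assumes "finite Z" "\<And>z. z \<in> Z \<Longrightarrow> has_RS_integral (f z) g a b (I z)"
  shows "has_RS_integral (\<lambda>x. \<Sum>z\<in>Z. f z x) g a b (\<Sum>z\<in>Z. I z)"
  using assms
proof (induction Z rule: finite_induct)
  case empty then show ?case by (simp add: has_RS_zero)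
next
  case (insert z Z)
  then show ?case by (simp add: has_RS_add)
qed

lemma IBP:
  assumes "a \<le> b" "has_RS_integral F G a b I1" "has_RS_integral G F a b I2"
  shows "F b * G b - F a * G a = I1 + I2"
proof (rule ccontr)
  assume ne: "F b * G b - F a * G a \<noteq> I1 + I2"
  define e where "e = \<bar>F b * G b - F a * G a - (I1 + I2)\<bar> / 2"
  have e: "e > 0" using ne by (simp add: e_def)
  obtain d1 where d1: "d1 > 0" "\<And>n t s. tp a b n t s d1 \<Longrightarrow> \<bar>rss F G n t s - I1\<bar> < e/2"
    using assms(2) e unfolding has_RS_iff by (meson half_gt_zero)
  obtain d2 where d2: "d2 > 0" "\<And>n t s. tp a b n t s d2 \<Longrightarrow> \<bar>rss G F n t s - I2\<bar> < e/2"
    using assms(3) e unfolding has_RS_iff by (meson half_gt_zero)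
  obtain n t where p: "tp a b n t t (min d1 d2)" "tp a b n t (\<lambda>j. t (Suc j)) (min d1 d2)"
    using fine_tp[OF assms(1), of "min d1 d2"] d1 d2 by auto
  have p1: "tp a b n t (\<lambda>j. t (Suc j)) d1" and p2: "tp a b n t t d2" using p unfolding tp_def by auto
  have t0: "t 0 = a" "t n = b" using p unfolding tp_def by auto
  have "rss F G n t (\<lambda>j. t (Suc j)) + rss G F n t t = (\<Sum>j<n. F (t (Suc j)) * G (t (Suc j)) - F (t j) * G (t j))"
    unfolding rss_def sum.distrib[symmetric] by (intro sum.cong refl) (simp add: algebra_simps)
  also have "\<dots> = F b * G b - F a * G a" using sum_lessThan_telescope[of "\<lambda>j. F (t j) * G (t j)" n] t0 by simp
  finally have eq: "rss F G n t (\<lambda>j. t (Suc j)) + rss G F n t t = F b * G b - F a * G a" .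
  have "\<bar>(F b * G b - F a * G a) - (I1 + I2)\<bar> < e" using abs_half_add[OF d1(2)[OF p1] d2(2)[OF p2]] eq by simp
  moreover have "\<bar>(F b * G b - F a * G a) - (I1 + I2)\<bar> = 2 * e" using e_def by simp
  ultimately show False by linarith
qed



definition clamp :: "real \<Rightarrow> real \<Rightarrow> real \<Rightarrow> real" where
  "clamp a b x = max a (min b x)"

definition Pd :: "(real \<Rightarrow> real) \<Rightarrow> real \<Rightarrow> real \<Rightarrow> real \<Rightarrow> real" where
  "Pd g a b x = Var g a (clamp a b x) + g (clamp a b x)"

definition Nd :: "(real \<Rightarrow> real) \<Rightarrow> real \<Rightarrow> real \<Rightarrow> real \<Rightarrow> real" where
  "Nd g a b x = Var g a (clamp a b x)"

definition Psi :: "(real \<Rightarrow> real) \<Rightarrow> real \<Rightarrow> real \<Rightarrow> (real \<Rightarrow> real) \<Rightarrow> real \<Rightarrow> real" where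
  "Psi g a b h x = Phi (Pd g a b) a h x - Phi (Nd g a b) a h x"

lemma clamp_in: "a \<le> b \<Longrightarrow> clamp a b x \<in> {a..b}"
  by (auto simp: clamp_def)

lemma clamp_id: "x \<in> {a..b} \<Longrightarrow> clamp a b x = x"
  by (auto simp: clamp_def)

lemma clamp_mono: "x \<le> y \<Longrightarrow> clamp a b x \<le> clamp a b y"
  by (auto simp: clamp_def)

lemma clamp_cont: "continuous_on UNIV (clamp a b)"
  unfolding clamp_def by (intro continuous_intros)

lemma cont_clamp_comp:
  assumes "a \<le> b" "continuous_on {a..b} f"
  shows "continuous_on UNIV (\<lambda>x. f (clamp a b x))"
  by (rule continuous_on_compose2[OF assms(2) clamp_cont]) (use clamp_in[OF assms(1)] in auto)

lemma Pd_Nd_mc: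
  assumes ab: "a \<le> b" and bv: "bv g a b" and cont: "continuous_on {a..b} g"
  shows "mc (Pd g a b)" "mc (Nd g a b)"
proof -
  have cV: "continuous_on {a..b} (\<lambda>x. Var g a x)" by (rule Var_cont[OF bv cont])
  have m: "Var g a (clamp a b x) + \<bar>g (clamp a b y) - g (clamp a b x)\<bar> \<le> Var g a (clamp a b y)" if "x \<le> y" for x y
    using Var_mono_abs[OF bv, of "clamp a b x" "clamp a b y"] clamp_in[OF ab, of x] clamp_in[OF ab, of y]
      clamp_mono[OF that, of a b] by auto
  show "mc (Pd g a b)" unfolding mc_def Pd_def
  proof (intro conjI allI impI)
    fix x y :: real assume "x \<le> y"
    from m[OF this] show "Var g a (clamp a b x) + g (clamp a b x) \<le> Var g a (clamp a b y) + g (clamp a b y)"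
      by linarith
  next
    show "continuous_on UNIV (\<lambda>x. Var g a (clamp a b x) + g (clamp a b x))"
      by (intro continuous_intros cont_clamp_comp[OF ab cV] cont_clamp_comp[OF ab cont])
  qed
  show "mc (Nd g a b)" unfolding mc_def Nd_def
  proof (intro conjI allI impI)
    fix x y :: real assume "x \<le> y"
    from m[OF this] show "Var g a (clamp a b x) \<le> Var g a (clamp a b y)" by linarith
  next
    show "continuous_on UNIV (\<lambda>x. Var g a (clamp a b x))" by (rule cont_clamp_comp[OF ab cV])
  qed
qed

lemma L2d:
  assumes P: "mc P" and N: "mc N" and at: "a \<le> t" and h: "continuous_on {a..t} h" and k: "continuous_on {a..t} k"
  shows "has_RS_integral k (\<lambda>x. Phi P a h x - Phi N a h x) a t
           (Phi P a (\<lambda>u. k u * h u) t - Phi N a (\<lambda>u. k u * h u) t)"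
  unfolding has_RS_iff
proof (intro allI impI)
  fix e :: real assume e: "e > 0"
  obtain d1 where d1: "d1 > 0" "\<And>n tt s. tp a t n tt s d1 \<Longrightarrow> \<bar>rss k (Phi P a h) n tt s - Phi P a (\<lambda>u. k u * h u) t\<bar> < e/2"
    using L2[OF P at h k, of "e/2"] e by auto
  obtain d2 where d2: "d2 > 0" "\<And>n tt s. tp a t n tt s d2 \<Longrightarrow> \<bar>rss k (Phi N a h) n tt s - Phi N a (\<lambda>u. k u * h u) t\<bar> < e/2"
    using L2[OF N at h k, of "e/2"] e by auto
  show "\<exists>d>0. \<forall>n tt s. tp a t n tt s d \<longrightarrow> \<bar>rss k (\<lambda>x. Phi P a h x - Phi N a h x) n tt s -
           (Phi P a (\<lambda>u. k u * h u) t - Phi N a (\<lambda>u. k u * h u) t)\<bar> < e"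
  proof (intro exI[of _ "min d1 d2"] conjI allI impI)
    fix n tt s assume p: "tp a t n tt s (min d1 d2)"
    have p1: "tp a t n tt s d1" and p2: "tp a t n tt s d2" using p unfolding tp_def by auto
    have eq: "rss k (\<lambda>x. Phi P a h x - Phi N a h x) n tt s = rss k (Phi P a h) n tt s + (- rss k (Phi N a h) n tt s)"
      unfolding rss_def by (simp add: sum_subtractf[symmetric] algebra_simps)
    have "\<bar>- rss k (Phi N a h) n tt s - (- Phi N a (\<lambda>u. k u * h u) t)\<bar> < e/2" using d2(2)[OF p2] by (simp add: abs_minus_commute)
    from abs_half_add[OF d1(2)[OF p1] this]
    show "\<bar>rss k (\<lambda>x. Phi P a h x - Phi N a h x) n tt s - (Phi P a (\<lambda>u. k u * h u) t - Phi N a (\<lambda>u. k u * h u) t)\<bar> < e"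
      unfolding eq by simp
  qed (use d1 d2 in auto)
qed

locale scal =
  fixes g :: "real \<Rightarrow> real" and a b :: real
  assumes ab: "a \<le> b" and bvg: "bv g a b" and contg: "continuous_on {a..b} g"
begin

lemma P_mc: "mc (Pd g a b)" and N_mc: "mc (Nd g a b)"
  using Pd_Nd_mc[OF ab bvg contg] by auto

lemma Psi_one: assumes "x \<in> {a..b}" shows "Psi g a b (\<lambda>_. 1) x = g x - g a"
proof -
  have "Psi g a b (\<lambda>_. 1) x = (Pd g a b x - Pd g a b a) - (Nd g a b x - Nd g a b a)"
    unfolding Psi_def using Phi_one[OF P_mc, of a x] Phi_one[OF N_mc, of a x] assms by auto
  also have "\<dots> = g x - g a" unfolding Pd_def Nd_def using assms ab by (simp add: clamp_id)
  finally show ?thesis .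
qed

lemma M1_int:
  assumes h: "continuous_on {a..b} h" and t: "t \<in> {a..b}"
  shows "has_RS_integral h g a t (Psi g a b h t)"
proof -
  have ht: "continuous_on {a..t} h" using h t by (auto intro: continuous_on_subset)
  have "has_RS_integral h (Psi g a b (\<lambda>_. 1)) a t (Psi g a b (\<lambda>u. h u * 1) t)"
    unfolding Psi_def by (rule L2d[OF P_mc N_mc _ _ ht]) (use t in auto)
  then have "has_RS_integral h (Psi g a b (\<lambda>_. 1)) a t (Psi g a b h t)" by simp
  then show ?thesis
  proof (rule has_RS_cong)
    fix x assume x: "x \<in> {a..t}"
    then show "Psi g a b (\<lambda>_. 1) x - Psi g a b (\<lambda>_. 1) a = g x - g a"
      using Psi_one[of x] Psi_one[of a] t ab by auto
  qed simp
qed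

lemma M1_eq:
  assumes h: "continuous_on {a..b} h" and t: "t \<in> {a..b}"
  shows "RS_integral h g a t = Psi g a b h t"
  using RS_integral_eq[OF M1_int[OF h t]] t by auto

lemma M1_has:
  assumes h: "continuous_on {a..b} h" and t: "t \<in> {a..b}"
  shows "has_RS_integral h g a t (RS_integral h g a t)"
  using M1_int[OF h t] M1_eq[OF h t] by simp

lemma M1_cont:
  assumes h: "continuous_on {a..b} h"
  shows "continuous_on {a..b} (RS_integral h g a)"
proof -
  have "continuous_on {a..b} (Psi g a b h)"
    unfolding Psi_def by (intro continuous_intros Phi_cont[OF P_mc h] Phi_cont[OF N_mc h])
  then show ?thesis by (rule continuous_on_cong[THEN iffD1, rotated 2]) (use M1_eq[OF h] in auto)
qed

lemma M1_assoc:
  assumes h: "continuous_on {a..b} h" and k: "continuous_on {a..b} k" and t: "t \<in> {a..b}"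
  shows "has_RS_integral k (RS_integral h g a) a t (RS_integral (\<lambda>u. k u * h u) g a t)"
proof -
  have ht: "continuous_on {a..t} h" "continuous_on {a..t} k" using h k t by (auto intro: continuous_on_subset)
  have kh: "continuous_on {a..b} (\<lambda>u. k u * h u)" by (intro continuous_intros h k)
  have "has_RS_integral k (Psi g a b h) a t (Psi g a b (\<lambda>u. k u * h u) t)"
    unfolding Psi_def by (rule L2d[OF P_mc N_mc _ ht]) (use t in auto)
  then have "has_RS_integral k (RS_integral h g a) a t (Psi g a b (\<lambda>u. k u * h u) t)"
    by (rule has_RS_cong) (use t M1_eq[OF h] in auto)
  then show ?thesis using M1_eq[OF kh t] by simp
qed

end



fun shuf :: "'a list \<Rightarrow> 'a list \<Rightarrow> 'a list list" where
  "shuf [] v = [v]"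
| "shuf u [] = [u]"
| "shuf (e # u) (f # v) = map (Cons e) (shuf u (f # v)) @ map (Cons f) (shuf (e # u) v)"

lemma shuf_set: "z \<in> set (shuf u v) \<Longrightarrow> set z \<subseteq> set u \<union> set v"
proof (induction u v arbitrary: z rule: shuf.induct)
  case (3 e u f v)
  from "3.prems" consider (l) z' where "z = e # z'" "z' \<in> set (shuf u (f # v))"
    | (r) z' where "z = f # z'" "z' \<in> set (shuf (e # u) v)" by auto
  then show ?case
  proof cases
    case l then show ?thesis using "3.IH"(1)[of z'] by auto
  next
    case r then show ?thesis using "3.IH"(2)[of z'] by auto
  qed
qed auto

lemma tp_triv: "tp a a n t s d \<Longrightarrow> n = 0"
proof (rule ccontr)
  assume p: "tp a a n t s d" and "n \<noteq> 0"
  then have "t 0 < t 1" "t 1 \<le> a" "t 0 = a" using tp_range[OF p, of 0] p by (auto simp: tp_def)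
  then show False by simp
qed

lemma has_RS_triv: "has_RS_integral f g a a 0"
  unfolding has_RS_iff by (auto simp: rss_def intro!: exI[of _ 1] dest: tp_triv)

lemma RS_triv [simp]: "RS_integral f g a a = 0"
  by (rule RS_integral_eq[OF has_RS_triv]) simp

lemma has_RS_sum_list:
  assumes "\<And>z. z \<in> set Z \<Longrightarrow> has_RS_integral (f z) g a b (I z)"
  shows "has_RS_integral (\<lambda>x. \<Sum>z\<leftarrow>Z. f z x) g a b (\<Sum>z\<leftarrow>Z. I z)"
  using assms
proof (induction Z)
  case Nil then show ?case by (simp add: has_RS_zero)
next
  case (Cons z Z)
  then show ?case by (simp add: has_RS_add)
qed

locale pth =
  fixes \<gamma> :: "real \<Rightarrow> 'v::euclidean_space" and a b :: real
  assumes ab: "a \<le> b" and contp: "continuous_on {a..b} \<gamma>" and bvar: "bounded_variation_on \<gamma> a b"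
begin

lemma scal_e: "scal (\<lambda>u. \<gamma> u \<bullet> e) a b"
proof
  show "a \<le> b" by (rule ab)
  show "continuous_on {a..b} (\<lambda>u. \<gamma> u \<bullet> e)" by (intro continuous_intros contp)
  obtain M where M: "\<And>n t. t 0 = a \<Longrightarrow> t n = b \<Longrightarrow> (\<forall>j<n. t j \<le> t (Suc j)) \<Longrightarrow>
        (\<Sum>j<n. norm (\<gamma> (t (Suc j)) - \<gamma> (t j))) \<le> M"
    using bvar unfolding bounded_variation_on_def by blast
  show "bv (\<lambda>u. \<gamma> u \<bullet> e) a b" unfolding bv_def
  proof (intro exI[of _ "M * norm e"] allI impI)
    fix n t assume p: "ptn a b n t"
    have "vsum (\<lambda>u. \<gamma> u \<bullet> e) n t \<le> (\<Sum>j<n. norm (\<gamma> (t (Suc j)) - \<gamma> (t j)) * norm e)"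
      unfolding vsum_def
    proof (intro sum_mono)
      fix j
      have "\<bar>\<gamma> (t (Suc j)) \<bullet> e - \<gamma> (t j) \<bullet> e\<bar> = \<bar>(\<gamma> (t (Suc j)) - \<gamma> (t j)) \<bullet> e\<bar>" by (simp add: inner_diff_left)
      also have "\<dots> \<le> norm (\<gamma> (t (Suc j)) - \<gamma> (t j)) * norm e" by (rule Cauchy_Schwarz_ineq2)
      finally show "\<bar>\<gamma> (t (Suc j)) \<bullet> e - \<gamma> (t j) \<bullet> e\<bar> \<le> norm (\<gamma> (t (Suc j)) - \<gamma> (t j)) * norm e" .
    qed
    also have "\<dots> = (\<Sum>j<n. norm (\<gamma> (t (Suc j)) - \<gamma> (t j))) * norm e" by (simp add: sum_distrib_right)
    also have "\<dots> \<le> M * norm e" using M[of t n] p unfolding ptn_def by (intro mult_right_mono) auto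
    finally show "vsum (\<lambda>u. \<gamma> u \<bullet> e) n t \<le> M * norm e" .
  qed
qed

abbreviation S where "S w \<equiv> sig_rev \<gamma> a w"

lemma S_cons: "S (e # w) = RS_integral (S w) (\<lambda>u. \<gamma> u \<bullet> e) a"
  by (rule ext) simp

lemma S_cont: "continuous_on {a..b} (S w)"
proof (induction w)
  case Nil then show ?case by simp
next
  case (Cons e w)
  interpret s: scal "\<lambda>u. \<gamma> u \<bullet> e" a b by (rule scal_e)
  show ?case unfolding S_cons by (rule s.M1_cont[OF Cons.IH])
qed

lemma S_a: "w \<noteq> [] \<Longrightarrow> S w a = 0"
  by (cases w) auto

lemma S_has: "t \<in> {a..b} \<Longrightarrow> has_RS_integral (S w) (\<lambda>u. \<gamma> u \<bullet> e) a t (S (e # w) t)"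
proof -
  assume t: "t \<in> {a..b}"
  interpret s: scal "\<lambda>u. \<gamma> u \<bullet> e" a b by (rule scal_e)
  show ?thesis using s.M1_has[OF S_cont t] by simp
qed

lemma RS_cong_int:
  assumes "t \<in> {a..b}" "has_RS_integral f g a t I" "\<And>x. x \<in> {a..t} \<Longrightarrow> f x = f' x"
  shows "RS_integral f' g a t = I"
  by (rule RS_integral_eq[OF has_RS_cong[OF assms(2,3)]]) (use assms(1) in auto)

lemma shuffle:
  "t \<in> {a..b} \<Longrightarrow> S u t * S v t = (\<Sum>z\<leftarrow>shuf u v. S z t)"
proof (induction u v arbitrary: t rule: shuf.induct)
  case (1 v) then show ?case by simp
next
  case (2 e u) then show ?case by simp
next
  case (3 e u f v)
  note t = "3.prems"
  interpret se: scal "\<lambda>u. \<gamma> u \<bullet> e" a b by (rule scal_e)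
  interpret sf: scal "\<lambda>u. \<gamma> u \<bullet> f" a b by (rule scal_e)
  have tt: "a \<le> t" using t by auto
  define I1 where "I1 = RS_integral (\<lambda>r. S (e # u) r * S v r) (\<lambda>u. \<gamma> u \<bullet> f) a t"
  define I2 where "I2 = RS_integral (\<lambda>r. S (f # v) r * S u r) (\<lambda>u. \<gamma> u \<bullet> e) a t"
  have h1: "has_RS_integral (S (e # u)) (S (f # v)) a t I1"
    unfolding I1_def S_cons[of f v] by (rule sf.M1_assoc[OF S_cont S_cont t])
  have h2: "has_RS_integral (S (f # v)) (S (e # u)) a t I2"
    unfolding I2_def S_cons[of e u] by (rule se.M1_assoc[OF S_cont S_cont t])
  have ibp: "S (e # u) t * S (f # v) t = I1 + I2"
    using IBP[OF tt h1 h2] by (simp add: S_a)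
  have "I1 = (\<Sum>z\<leftarrow>shuf (e # u) v. S (f # z) t)"
    unfolding I1_def
  proof (rule RS_cong_int[OF t])
    show "has_RS_integral (\<lambda>x. \<Sum>z\<leftarrow>shuf (e # u) v. S z x) (\<lambda>u. \<gamma> u \<bullet> f) a t (\<Sum>z\<leftarrow>shuf (e # u) v. S (f # z) t)"
      by (rule has_RS_sum_list) (rule S_has[OF t])
    fix x assume "x \<in> {a..t}"
    then have "x \<in> {a..b}" using t by auto
    then show "(\<Sum>z\<leftarrow>shuf (e # u) v. S z x) = S (e # u) x * S v x" using "3.IH"(2) by simp
  qed
  moreover have "I2 = (\<Sum>z\<leftarrow>shuf u (f # v). S (e # z) t)"
    unfolding I2_def
  proof (rule RS_cong_int[OF t])
    show "has_RS_integral (\<lambda>x. \<Sum>z\<leftarrow>shuf u (f # v). S z x) (\<lambda>u. \<gamma> u \<bullet> e) a t (\<Sum>z\<leftarrow>shuf u (f # v). S (e # z) t)"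
      by (rule has_RS_sum_list) (rule S_has[OF t])
    fix x assume "x \<in> {a..t}"
    then have "x \<in> {a..b}" using t by auto
    then show "(\<Sum>z\<leftarrow>shuf u (f # v). S z x) = S (f # v) x * S u x" using "3.IH"(1) by (simp add: mult.commute)
  qed
  ultimately show ?case using ibp by (simp add: comp_def)
qed

end



lemma pow_ineq:
  fixes x y :: real
  assumes "0 \<le> x" "x \<le> y"
  shows "x ^ k / fact k * (y - x) \<le> (y ^ Suc k - x ^ Suc k) / fact (Suc k)"
proof -
  have "y ^ Suc k - x ^ Suc k = (y - x) * (\<Sum>i<Suc k. x ^ (Suc k - Suc i) * y ^ i)"
    by (rule power_diff_sumr2)
  moreover have "(\<Sum>i<Suc k. x ^ (Suc k - Suc i) * y ^ i) \<ge> (\<Sum>i<Suc k. x ^ k)"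
  proof (intro sum_mono)
    fix i assume i: "i \<in> {..<Suc k}"
    have "x ^ (Suc k - Suc i) * x ^ i \<le> x ^ (Suc k - Suc i) * y ^ i"
      using assms by (intro mult_left_mono power_mono) auto
    moreover have "x ^ (Suc k - Suc i) * x ^ i = x ^ k" using i by (simp add: power_add[symmetric])
    ultimately show "x ^ k \<le> x ^ (Suc k - Suc i) * y ^ i" by simp
  qed
  ultimately have "y ^ Suc k - x ^ Suc k \<ge> (y - x) * (real (Suc k) * x ^ k)"
    using assms by (simp add: mult_left_mono)
  then have "(y ^ Suc k - x ^ Suc k) / fact (Suc k) \<ge> (y - x) * (real (Suc k) * x ^ k) / fact (Suc k)"
    by (intro divide_right_mono) auto
  moreover have "(y - x) * (real (Suc k) * x ^ k) / fact (Suc k) = x ^ k / fact k * (y - x)"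
    by (simp add: fact_Suc field_simps del: of_nat_Suc)
  ultimately show ?thesis by (simp add: ac_simps)
qed

context pth
begin

definition Lam :: "real \<Rightarrow> real" where
  "Lam t = (\<Sum>e\<in>Basis. Var (\<lambda>u. \<gamma> u \<bullet> e) a t)"

lemma Lam_a: "Lam a = 0"
  by (simp add: Lam_def Var_refl)

lemma Var_e_mono: "a \<le> x \<Longrightarrow> x \<le> y \<Longrightarrow> y \<le> b \<Longrightarrow>
   Var (\<lambda>u. \<gamma> u \<bullet> e) a x + \<bar>\<gamma> y \<bullet> e - \<gamma> x \<bullet> e\<bar> \<le> Var (\<lambda>u. \<gamma> u \<bullet> e) a y"
proof -
  assume xy: "a \<le> x" "x \<le> y" "y \<le> b"
  interpret s: scal "\<lambda>u. \<gamma> u \<bullet> e" a b by (rule scal_e)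
  show ?thesis using Var_mono_abs[OF s.bvg xy] by simp
qed

lemma Lam_abs:
  assumes e: "e \<in> Basis" and xy: "a \<le> x" "x \<le> y" "y \<le> b"
  shows "\<bar>\<gamma> y \<bullet> e - \<gamma> x \<bullet> e\<bar> \<le> Lam y - Lam x"
proof -
  have "\<bar>\<gamma> y \<bullet> e - \<gamma> x \<bullet> e\<bar> \<le> Var (\<lambda>u. \<gamma> u \<bullet> e) a y - Var (\<lambda>u. \<gamma> u \<bullet> e) a x"
    using Var_e_mono[OF xy, of e] by linarith
  also have "\<dots> \<le> (\<Sum>e'\<in>Basis. Var (\<lambda>u. \<gamma> u \<bullet> e') a y - Var (\<lambda>u. \<gamma> u \<bullet> e') a x)"
  proof (rule member_le_sum[OF e])
    fix e' assume "e' \<in> Basis - {e}"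
    show "0 \<le> Var (\<lambda>u. \<gamma> u \<bullet> e') a y - Var (\<lambda>u. \<gamma> u \<bullet> e') a x"
      using Var_e_mono[OF xy, of e'] abs_ge_zero[of "\<gamma> y \<bullet> e' - \<gamma> x \<bullet> e'"] by linarith
  qed simp
  also have "\<dots> = Lam y - Lam x" by (simp add: Lam_def sum_subtractf)
  finally show ?thesis .
qed

lemma Lam_mono: "a \<le> x \<Longrightarrow> x \<le> y \<Longrightarrow> y \<le> b \<Longrightarrow> Lam x \<le> Lam y"
proof -
  assume xy: "a \<le> x" "x \<le> y" "y \<le> b"
  obtain e :: 'v where e: "e \<in> Basis" using nonempty_Basis by blast
  show ?thesis using Lam_abs[OF e xy] abs_ge_zero[of "\<gamma> y \<bullet> e - \<gamma> x \<bullet> e"] by linarith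
qed

lemma Lam_nonneg: "a \<le> x \<Longrightarrow> x \<le> b \<Longrightarrow> 0 \<le> Lam x"
  using Lam_mono[of a x] Lam_a ab by auto

lemma S_bound:
  "set w \<subseteq> Basis \<Longrightarrow> t \<in> {a..b} \<Longrightarrow> \<bar>S w t\<bar> \<le> Lam t ^ length w / fact (length w)"
proof (induction w arbitrary: t)
  case Nil then show ?case by simp
next
  case (Cons e w)
  define k where "k = length w"
  have e: "e \<in> Basis" and w: "set w \<subseteq> Basis" using Cons.prems by auto
  have t: "t \<in> {a..b}" using Cons.prems by auto
  define B where "B = Lam t ^ Suc k / fact (Suc k)"
  show ?case
  proof (rule ccontr)
    assume "\<not> ?thesis"
    then have gt: "\<bar>S (e # w) t\<bar> > B" by (simp add: B_def k_def)
    define eps where "eps = \<bar>S (e # w) t\<bar> - B"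
    have eps: "eps > 0" using gt by (simp add: eps_def)
    obtain d where d: "d > 0" "\<And>n tt s. tp a t n tt s d \<Longrightarrow> \<bar>rss (S w) (\<lambda>u. \<gamma> u \<bullet> e) n tt s - S (e # w) t\<bar> < eps"
      using S_has[OF t, of w e] eps unfolding has_RS_iff by blast
    obtain n tt where p: "tp a t n tt tt d" using fine_tp[of a t d] t d(1) by auto
    note r = tp_range[OF p]
    have tt0: "tt 0 = a" "tt n = t" using p by (auto simp: tp_def)
    have "\<bar>rss (S w) (\<lambda>u. \<gamma> u \<bullet> e) n tt tt\<bar> \<le> (\<Sum>j<n. \<bar>S w (tt j)\<bar> * \<bar>\<gamma> (tt (Suc j)) \<bullet> e - \<gamma> (tt j) \<bullet> e\<bar>)"
      unfolding rss_def by (rule order_trans[OF sum_abs]) (simp add: abs_mult)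
    also have "\<dots> \<le> (\<Sum>j<n. Lam (tt j) ^ k / fact k * (Lam (tt (Suc j)) - Lam (tt j)))"
    proof (intro sum_mono mult_mono)
      fix j assume j: "j \<in> {..<n}"
      then have rj: "a \<le> tt j" "tt (Suc j) \<le> t" "tt j < tt (Suc j)" using r by auto
      show "\<bar>S w (tt j)\<bar> \<le> Lam (tt j) ^ k / fact k" unfolding k_def
        by (rule Cons.IH[OF w]) (use rj t in auto)
      show "\<bar>\<gamma> (tt (Suc j)) \<bullet> e - \<gamma> (tt j) \<bullet> e\<bar> \<le> Lam (tt (Suc j)) - Lam (tt j)"
        by (rule Lam_abs[OF e]) (use rj t in auto)
      show "0 \<le> Lam (tt j) ^ k / fact k" using Lam_nonneg[of "tt j"] rj t by auto
    qed auto
    also have "\<dots> \<le> (\<Sum>j<n. (Lam (tt (Suc j)) ^ Suc k - Lam (tt j) ^ Suc k) / fact (Suc k))"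
    proof (intro sum_mono pow_ineq)
      fix j assume j: "j \<in> {..<n}"
      then have rj: "a \<le> tt j" "tt (Suc j) \<le> t" "tt j < tt (Suc j)" using r by auto
      show "0 \<le> Lam (tt j)" using Lam_nonneg[of "tt j"] rj t by auto
      show "Lam (tt j) \<le> Lam (tt (Suc j))" using Lam_mono[of "tt j" "tt (Suc j)"] rj t by auto
    qed
    also have "\<dots> = (Lam t ^ Suc k - Lam a ^ Suc k) / fact (Suc k)"
      unfolding sum_divide_distrib[symmetric] sum_lessThan_telescope[of "\<lambda>j. Lam (tt j) ^ Suc k"] tt0 ..
    also have "\<dots> = B" by (simp add: B_def Lam_a)
    finally have "\<bar>rss (S w) (\<lambda>u. \<gamma> u \<bullet> e) n tt tt\<bar> \<le> B" .
    moreover have "\<bar>rss (S w) (\<lambda>u. \<gamma> u \<bullet> e) n tt tt - S (e # w) t\<bar> < eps" by (rule d(2)[OF p])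
    moreover have "\<bar>rss (S w) (\<lambda>u. \<gamma> u \<bullet> e) n tt tt - (rss (S w) (\<lambda>u. \<gamma> u \<bullet> e) n tt tt - S (e # w) t)\<bar>
        \<le> \<bar>rss (S w) (\<lambda>u. \<gamma> u \<bullet> e) n tt tt\<bar> + \<bar>rss (S w) (\<lambda>u. \<gamma> u \<bullet> e) n tt tt - S (e # w) t\<bar>"
      by (rule abs_triangle_ineq4)
    ultimately show False unfolding eps_def by simp
  qed
qed

end



lemma lin_indep:
  fixes ch :: "nat \<Rightarrow> 'w list \<Rightarrow> real" and P :: "'w set" and n :: nat
  assumes mult: "\<And>i u v. i < n \<Longrightarrow> set u \<subseteq> P \<Longrightarrow> set v \<subseteq> P \<Longrightarrow> ch i u * ch i v = (\<Sum>z\<leftarrow>shuf u v. ch i z)"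
    and one: "\<And>i. i < n \<Longrightarrow> ch i [] = 1"
    and dist: "\<And>i j. i < n \<Longrightarrow> j < n \<Longrightarrow> i \<noteq> j \<Longrightarrow> \<exists>u. set u \<subseteq> P \<and> ch i u \<noteq> ch j u"
  shows "(\<And>u. set u \<subseteq> P \<Longrightarrow> (\<Sum>i<n. c i * ch i u) = 0) \<Longrightarrow> \<forall>i<n. c i = 0"
proof (induction "card {i. i < n \<and> c i \<noteq> 0}" arbitrary: c rule: less_induct)
  case less
  show ?case
  proof (rule ccontr)
    assume "\<not> (\<forall>i<n. c i = 0)"
    then obtain i0 where i0: "i0 < n" "c i0 \<noteq> 0" by blast
    define I where "I = {i. i < n \<and> c i \<noteq> 0}"
    have finI: "finite I" unfolding I_def by simp
    have i0I: "i0 \<in> I" using i0 by (simp add: I_def)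
    show False
    proof (cases "I = {i0}")
      case True
      have "(\<Sum>i<n. c i * ch i []) = (\<Sum>i\<in>{i0}. c i * ch i [])"
      proof (rule sum.mono_neutral_right)
        show "{i0} \<subseteq> {..<n}" using i0 by auto
        show "\<forall>i\<in>{..<n} - {i0}. c i * ch i [] = 0" using True unfolding I_def by auto
      qed simp
      also have "\<dots> = c i0" using one[OF i0(1)] by simp
      finally show False using less.prems[of "[]"] i0 by simp
    next
      case False
      then obtain j0 where j0: "j0 \<in> I" "j0 \<noteq> i0" using i0I by blast
      have j0n: "j0 < n" using j0 by (simp add: I_def)
      obtain u where u: "set u \<subseteq> P" "ch i0 u \<noteq> ch j0 u" using dist[OF i0(1) j0n] j0(2) by metis
      define c' where "c' i = c i * (ch i u - ch j0 u)" for i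
      have zero': "(\<Sum>i<n. c' i * ch i v) = 0" if v: "set v \<subseteq> P" for v
      proof -
        have "(\<Sum>i<n. c' i * ch i v) = (\<Sum>i<n. c i * (ch i u * ch i v)) - ch j0 u * (\<Sum>i<n. c i * ch i v)"
          unfolding c'_def by (simp add: algebra_simps sum_subtractf sum_distrib_left)
        also have "(\<Sum>i<n. c i * (ch i u * ch i v)) = (\<Sum>i<n. c i * (\<Sum>z\<leftarrow>shuf u v. ch i z))"
          using mult[OF _ u(1) v] by simp
        also have "\<dots> = (\<Sum>z\<leftarrow>shuf u v. \<Sum>i<n. c i * ch i z)"
          by (simp add: sum_list_sum_nth sum_distrib_left sum.swap[of _ "{..<n}"])
        also have "\<dots> = 0"
        proof -
          have "\<And>z. z \<in> set (shuf u v) \<Longrightarrow> (\<Sum>i<n. c i * ch i z) = 0"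
            using less.prems shuf_set u(1) v by blast
          then show ?thesis by (simp add: sum_list_sum_nth)
        qed
        finally show ?thesis using less.prems[OF v] by simp
      qed
      have sub: "{i. i < n \<and> c' i \<noteq> 0} \<subseteq> I - {j0}" unfolding I_def c'_def by auto
      have "card {i. i < n \<and> c' i \<noteq> 0} \<le> card (I - {j0})" by (rule card_mono) (use finI sub in auto)
      also have "\<dots> < card I" by (rule card_Diff1_less[OF finI j0(1)])
      finally have "\<forall>i<n. c' i = 0" using less.hyps[of c'] zero' unfolding I_def by blast
      then have "c' i0 = 0" using i0 by blast
      then show False using i0 u(2) by (simp add: c'_def)
    qed
  qed
qed



context pth
begin

lemma Lam_b_nonneg: "0 \<le> Lam b"
  using Lam_nonneg[of b] ab by simp

lemma sig_bound: "\<bar>signature \<gamma> a b w\<bar> \<le> Lam b ^ length w / fact (length w)"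
proof (cases "set w \<subseteq> Basis")
  case True
  have "\<bar>S (rev w) b\<bar> \<le> Lam b ^ length (rev w) / fact (length (rev w))"
    by (rule S_bound) (use True ab in auto)
  then show ?thesis using True by (simp add: signature_def)
next
  case False
  then show ?thesis using Lam_b_nonneg by (simp add: signature_def)
qed

end

lemma quad:
  fixes x :: "nat \<Rightarrow> 'w \<Rightarrow> real"
  shows "(\<Sum>i<n. \<Sum>j<n. c i * c j * (\<Sum>w\<in>W. x i w * x j w)) = (\<Sum>w\<in>W. (\<Sum>i<n. c i * x i w)\<^sup>2)"
proof -
  have "(\<Sum>w\<in>W. (\<Sum>i<n. c i * x i w)\<^sup>2) = (\<Sum>w\<in>W. \<Sum>i<n. \<Sum>j<n. c i * c j * (x i w * x j w))"
    by (simp add: power2_eq_square sum_product algebra_simps)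
  also have "\<dots> = (\<Sum>i<n. \<Sum>w\<in>W. \<Sum>j<n. c i * c j * (x i w * x j w))" by (rule sum.swap)
  also have "\<dots> = (\<Sum>i<n. \<Sum>j<n. \<Sum>w\<in>W. c i * c j * (x i w * x j w))" by (simp add: sum.swap[of _ W])
  also have "\<dots> = (\<Sum>i<n. \<Sum>j<n. c i * c j * (\<Sum>w\<in>W. x i w * x j w))" by (simp add: sum_distrib_left)
  finally show ?thesis by simp
qed

lemma HS_bound:
  fixes x y :: "'v::euclidean_space list \<Rightarrow> real"
  assumes "\<And>w. \<bar>x w\<bar> \<le> A ^ length w / fact (length w)" "\<And>w. \<bar>y w\<bar> \<le> B ^ length w / fact (length w)"
    and "0 \<le> A" "0 \<le> B"
  shows "\<bar>HS_inner k x y\<bar> \<le> (real DIM('v) * A * B) ^ k / (fact k)\<^sup>2"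
proof -
  let ?W = "{w. length w = k \<and> set w \<subseteq> (Basis::'v set)}"
  have W: "?W = {w. set w \<subseteq> Basis \<and> length w = k}" by auto
  have finW: "finite ?W" unfolding W by (rule finite_lists_length_eq) simp
  have cardW: "card ?W = DIM('v) ^ k" unfolding W by (rule card_lists_length_eq) simp
  have "\<bar>HS_inner k x y\<bar> \<le> (\<Sum>w\<in>?W. \<bar>x w\<bar> * \<bar>y w\<bar>)"
    unfolding HS_inner_def by (rule order_trans[OF sum_abs]) (simp add: abs_mult)
  also have "\<dots> \<le> (\<Sum>w\<in>?W. (A ^ k / fact k) * (B ^ k / fact k))"
  proof (intro sum_mono mult_mono)
    fix w assume "w \<in> ?W"
    then show "\<bar>x w\<bar> \<le> A ^ k / fact k" "\<bar>y w\<bar> \<le> B ^ k / fact k" using assms(1,2)[of w] by auto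
    show "0 \<le> A ^ k / fact k" using assms(3) by simp
  qed simp
  also have "\<dots> = real (DIM('v) ^ k) * (A ^ k / fact k) * (B ^ k / fact k)" using cardW by simp
  also have "\<dots> = (real DIM('v) * A * B) ^ k / (fact k)\<^sup>2"
    by (simp add: power_mult_distrib power2_eq_square)
  finally show ?thesis .
qed

theorem mainTheorem17:
  fixes \<gamma> :: "nat \<Rightarrow> real \<Rightarrow> 'v::euclidean_space"
    and a b :: real and n :: nat and \<phi> :: "nat \<Rightarrow> real"
  assumes "a \<le> b"
    and "\<And>i. i < n \<Longrightarrow> continuous_on {a..b} (\<gamma> i)"
    and "\<And>i. i < n \<Longrightarrow> bounded_variation_on (\<gamma> i) a b"
    and "\<And>i j. i < n \<Longrightarrow> j < n \<Longrightarrow> i \<noteq> j \<Longrightarrow> signature (\<gamma> i) a b \<noteq> signature (\<gamma> j) a b"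
    and "\<And>k. \<phi> k > 0"
    and "\<And>C::real. C > 0 \<Longrightarrow> summable (\<lambda>k. C ^ k * \<phi> k / (fact k)\<^sup>2)"
  shows "(\<forall>i<n. \<forall>j<n. summable (\<lambda>k. \<phi> k * HS_inner k (signature (\<gamma> i) a b) (signature (\<gamma> j) a b)))
    \<and> (\<forall>c :: nat \<Rightarrow> real. (\<exists>i<n. c i \<noteq> 0) \<longrightarrow>
         (\<Sum>i<n. \<Sum>j<n. c i * c j * phi_inner \<phi> (signature (\<gamma> i) a b) (signature (\<gamma> j) a b)) > 0)"
proof -
  have P: "pth (\<gamma> i) a b" if "i < n" for i using assms(1-3) that by (simp add: pth_def)
  define x where "x i = signature (\<gamma> i) a b" for i
  have summ: "summable (\<lambda>k. \<phi> k * HS_inner k (x i) (x j))" if ij: "i < n" "j < n" for i j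
  proof -
    interpret pi: pth "\<gamma> i" a b by (rule P[OF ij(1)])
    interpret pj: pth "\<gamma> j" a b by (rule P[OF ij(2)])
    define D where "D = real DIM('v) * pi.Lam b * pj.Lam b"
    have D: "0 \<le> D" unfolding D_def using pi.Lam_b_nonneg pj.Lam_b_nonneg by simp
    have HS: "\<bar>HS_inner k (x i) (x j)\<bar> \<le> D ^ k / (fact k)\<^sup>2" for k
      unfolding D_def x_def by (rule HS_bound[OF pi.sig_bound pj.sig_bound pi.Lam_b_nonneg pj.Lam_b_nonneg])
    show ?thesis
    proof (rule summable_comparison_test'[OF assms(6)[of "D + 1"]])
      show "D + 1 > 0" using D by simp
      fix k :: nat
      have "norm (\<phi> k * HS_inner k (x i) (x j)) = \<phi> k * \<bar>HS_inner k (x i) (x j)\<bar>"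
        using assms(5)[of k] by (simp add: abs_mult)
      also have "\<dots> \<le> \<phi> k * (D ^ k / (fact k)\<^sup>2)" using assms(5)[of k] HS[of k] by (intro mult_left_mono) auto
      also have "\<dots> \<le> \<phi> k * ((D + 1) ^ k / (fact k)\<^sup>2)"
        using assms(5)[of k] D by (intro mult_left_mono divide_right_mono power_mono) auto
      finally show "norm (\<phi> k * HS_inner k (x i) (x j)) \<le> (D + 1) ^ k * \<phi> k / (fact k)\<^sup>2" by (simp add: ac_simps)
    qed
  qed
  have part2: "(\<Sum>i<n. \<Sum>j<n. c i * c j * phi_inner \<phi> (x i) (x j)) > 0" if c: "\<exists>i<n. c i \<noteq> 0" for c
  proof -
    define W where "W k = {w. length w = k \<and> set w \<subseteq> (Basis::'v set)}" for k
    define T where "T k = \<phi> k * (\<Sum>w\<in>W k. (\<Sum>i<n. c i * x i w)\<^sup>2)" for k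
    have T_eq: "T k = (\<Sum>i<n. \<Sum>j<n. c i * c j * (\<phi> k * HS_inner k (x i) (x j)))" for k
    proof -
      have "(\<Sum>i<n. \<Sum>j<n. c i * c j * (\<phi> k * HS_inner k (x i) (x j))) =
            \<phi> k * (\<Sum>i<n. \<Sum>j<n. c i * c j * HS_inner k (x i) (x j))"
        by (simp add: sum_distrib_left algebra_simps)
      also have "\<dots> = T k" unfolding T_def HS_inner_def W_def quad ..
      finally show ?thesis by simp
    qed
    have sumT: "summable T" unfolding T_eq
      by (intro summable_sum summable_mult summ) auto
    have "(\<Sum>i<n. \<Sum>j<n. c i * c j * phi_inner \<phi> (x i) (x j)) =
          (\<Sum>i<n. \<Sum>j<n. \<Sum>k. c i * c j * (\<phi> k * HS_inner k (x i) (x j)))"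
      unfolding phi_inner_def by (intro sum.cong refl) (simp add: suminf_mult summ)
    also have "\<dots> = (\<Sum>i<n. \<Sum>k. \<Sum>j<n. c i * c j * (\<phi> k * HS_inner k (x i) (x j)))"
      by (intro sum.cong refl suminf_sum[symmetric] summable_mult summ) auto
    also have "\<dots> = (\<Sum>k. \<Sum>i<n. \<Sum>j<n. c i * c j * (\<phi> k * HS_inner k (x i) (x j)))"
      by (intro suminf_sum[symmetric] summable_sum summable_mult summ) auto
    also have "\<dots> = suminf T" unfolding T_eq ..
    finally have Q: "(\<Sum>i<n. \<Sum>j<n. c i * c j * phi_inner \<phi> (x i) (x j)) = suminf T" .
    have Tnn: "0 \<le> T k" for k unfolding T_def using assms(5)[of k] by (intro mult_nonneg_nonneg sum_nonneg) auto
    show ?thesis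
    proof (rule ccontr)
      assume "\<not> ?thesis"
      then have "suminf T \<le> 0" using Q by simp
      moreover have "0 \<le> suminf T" by (rule suminf_nonneg[OF sumT Tnn])
      ultimately have "suminf T = 0" by simp
      then have T0: "T k = 0" for k using suminf_eq_zero_iff[OF sumT Tnn] by blast
      have finW: "finite (W k)" for k
      proof -
        have "W k = {w. set w \<subseteq> Basis \<and> length w = k}" unfolding W_def by auto
        then show ?thesis by (simp add: finite_lists_length_eq)
      qed
      have zw: "(\<Sum>i<n. c i * x i w) = 0" if w: "w \<in> W k" for k w
      proof -
        have "(\<Sum>w\<in>W k. (\<Sum>i<n. c i * x i w)\<^sup>2) = 0" using T0[of k] assms(5)[of k] unfolding T_def by simp
        then have "\<forall>w\<in>W k. (\<Sum>i<n. c i * x i w)\<^sup>2 = 0" using sum_nonneg_eq_0_iff[OF finW[of k], of "\<lambda>w. (\<Sum>i<n. c i * x i w)\<^sup>2"] by simp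
        then show ?thesis using w by simp
      qed
      define ch where "ch i u = sig_rev (\<gamma> i) a u b" for i u
      have "\<forall>i<n. c i = 0"
      proof (rule lin_indep[where ch = ch and P = Basis])
        fix i and u v :: "'v list" assume i: "i < n" and uv: "set u \<subseteq> (Basis :: 'v set)" "set v \<subseteq> Basis"
        interpret pi: pth "\<gamma> i" a b by (rule P[OF i])
        show "ch i u * ch i v = (\<Sum>z\<leftarrow>shuf u v. ch i z)"
          unfolding ch_def by (rule pi.shuffle) (use assms(1) in auto)
      next
        fix i show "ch i [] = 1" by (simp add: ch_def)
      next
        fix i j assume ij: "i < n" "j < n" "i \<noteq> j"
        have "x i \<noteq> x j" using assms(4)[OF ij] by (simp add: x_def)
        then obtain w where w: "x i w \<noteq> x j w" by blast
        then have wb: "set w \<subseteq> Basis" by (auto simp: x_def signature_def split: if_splits)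
        show "\<exists>u. set u \<subseteq> Basis \<and> ch i u \<noteq> ch j u"
          using w wb by (intro exI[of _ "rev w"]) (auto simp: x_def signature_def ch_def)
      next
        fix u :: "'v list" assume u: "set u \<subseteq> Basis"
        have "rev u \<in> W (length u)" using u by (simp add: W_def)
        from zw[OF this] show "(\<Sum>i<n. c i * ch i u) = 0" using u by (simp add: x_def signature_def ch_def)
      qed
      then show False using c by blast
    qed
  qed
  show ?thesis using summ part2 unfolding x_def by blast
qed


end
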